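(* Let $\mathcal{A}$ be a nonnegative weakly irreducible tensor of order $m$ and dimension $n$ which is spectral $\ell$-symmetric. Then $(\mathbb{P}\mathbb{V},\circ)$ is an abelian group which contains $\mathbb{P}\mathbb{V}_0$ as a subgroup and $\mathbb{P}\mathbb{V}_j$ as a coset of $\mathbb{P}\mathbb{V}_0$ for each $j\in[\ell-1]$, and the map $\Psi:\mathbb{P}\mathbb{V}\to\mathfrak{D}$, $y\mapsto D_y$, is a group isomorphism which sends $\mathbb{P}\mathbb{V}_j$ onto $\mathfrak{D}^{(j)}$ for $j=0,1,\ldots,\ell-1$.
   Context: Tensors: order $m$, dimension $n$, entries $a_{i_1\cdots i_m}$, $i_k\in[n]$. For $x\in\mathbb{C}^n$, $(\mathcal{A}x^{m-1})_i=\sum_{i_2,\dots,i_m}a_{ii_2\cdots i_m}x_{i_2}\cdots x_{i_m}$, $x^{[m-1]}=(x_i^{m-1})_i$; $\lambda$ is an eigenvalue with eigenvector $x\ne0$ if $\mathcal{A}x^{m-1}=\lambda x^{[m-1]}$. Spectrum $\mathrm{Spec}(\mathcal{A})$: multiset of roots of $\det(\lambda\mathcal{I}-\mathcal{A})$ (resultant-based characteristic polynomial); $\rho(\mathcal{A})$: largest modulus of an eigenvalue. Weakly irreducible: the digraph on $[n]$ with arc $(i,j)$ whenever some $a_{ii_2\cdots i_m}\neq0$ with $j\in\{i_2,\dots,i_m\}$ is strongly connected. Spectral $\ell$-symmetric: $\mathrm{Spec}(\mathcal{A})=e^{\mathrm{i}2\pi/\ell}\mathrm{Spec}(\mathcal{A})$.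 For diagonal $P,Q$, $(P\mathcal{A}Q)_{i_1\cdots i_m}=p_{i_1}a_{i_1\cdots i_m}q_{i_2}\cdots q_{i_m}$. $\mathfrak{D}^{(j)}$ ($j=0,\dots,\ell-1$) is the set of invertible diagonal $D$ with $d_{11}=1$ and $\mathcal{A}=e^{-\mathrm{i}2\pi j/\ell}D^{-(m-1)}\mathcal{A}D$, and $\mathfrak{D}=\bigcup_j\mathfrak{D}^{(j)}$. Known facts: for nonnegative weakly irreducible $\mathcal{A}$, $\rho(\mathcal{A})$ is an eigenvalue with a positive eigenvector unique up to scaling, and every eigenvector for an eigenvalue of modulus $\rho(\mathcal{A})$ has no zero entries. Let $\lambda_j=\rho(\mathcal{A})e^{\mathrm{i}2\pi j/\ell}$ and let $\mathbb{P}\mathbb{V}_j$ be the set of eigenvectors $y$ of $\mathcal{A}$ for $\lambda_j$ normalized so that $y_1=1$ (one representative per projective eigenvector); $\mathbb{P}\mathbb{V}=\bigcup_{j=0}^{\ell-1}\mathbb{P}\mathbb{V}_j$. Let $v_p\in\mathbb{P}\mathbb{V}_0$ be the positive one. For $y\in\mathbb{P}\mathbb{V}$, $D_y=\mathrm{diag}(y_1/|y_1|,\dots,y_n/|y_n|)$, and $y\circ\hat y:=D_yD_{\hat y}v_p$. *)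

theory Defs
  imports "Jordan_Normal_Form.Matrix" "HOL-Algebra.Coset"
begin

text \<open>Conventions: indices run over {0..<n} (index 0 plays the role of index 1 in the paper).
A tensor of order m and dimension n with real entries is a function on index lists;
only lists of length m with entries < n are relevant.\<close>

definition tidx :: "nat \<Rightarrow> nat \<Rightarrow> nat list set" where
  "tidx k n = {is. length is = k \<and> set is \<subseteq> {..<n}}"

definition tensor_nonneg :: "nat \<Rightarrow> nat \<Rightarrow> (nat list \<Rightarrow> real) \<Rightarrow> bool" where
  "tensor_nonneg m n A \<longleftrightarrow> (\<forall>is \<in> tidx m n. 0 \<le> A is)"

definition tensor_apply :: "nat \<Rightarrow> nat \<Rightarrow> (nat list \<Rightarrow> real) \<Rightarrow> complex vec \<Rightarrow> complex vec" where
  "tensor_apply m n A x = vec n (\<lambda>i. \<Sum>is \<in> tidx (m - 1) n.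
      complex_of_real (A (i # is)) * prod_list (map (\<lambda>k. x $ k) is))"

definition vpow :: "nat \<Rightarrow> complex vec \<Rightarrow> complex vec" where
  "vpow k x = map_vec (\<lambda>t. t ^ k) x"

definition is_eigenpair :: "nat \<Rightarrow> nat \<Rightarrow> (nat list \<Rightarrow> real) \<Rightarrow> complex \<Rightarrow> complex vec \<Rightarrow> bool" where
  "is_eigenpair m n A lam x \<longleftrightarrow> x \<in> carrier_vec n \<and> x \<noteq> 0\<^sub>v n \<and>
      tensor_apply m n A x = lam \<cdot>\<^sub>v vpow (m - 1) x"

definition eigenvalues :: "nat \<Rightarrow> nat \<Rightarrow> (nat list \<Rightarrow> real) \<Rightarrow> complex set" where
  "eigenvalues m n A = {lam. \<exists>x. is_eigenpair m n A lam x}"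

definition spec_radius :: "nat \<Rightarrow> nat \<Rightarrow> (nat list \<Rightarrow> real) \<Rightarrow> real" where
  "spec_radius m n A = Sup (cmod ` eigenvalues m n A)"

definition tensor_arcs :: "nat \<Rightarrow> nat \<Rightarrow> (nat list \<Rightarrow> real) \<Rightarrow> (nat \<times> nat) set" where
  "tensor_arcs m n A = {(i, j). i < n \<and> j < n \<and>
      (\<exists>is \<in> tidx (m - 1) n. A (i # is) \<noteq> 0 \<and> j \<in> set is)}"

definition weakly_irreducible :: "nat \<Rightarrow> nat \<Rightarrow> (nat list \<Rightarrow> real) \<Rightarrow> bool" where
  "weakly_irreducible m n A \<longleftrightarrow>
     (\<forall>i < n. \<forall>j < n. (i, j) \<in> (tensor_arcs m n A)\<^sup>*)"

definition spectral_sym :: "nat \<Rightarrow> nat \<Rightarrow> (nat list \<Rightarrow> real) \<Rightarrow> nat \<Rightarrow> bool" where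
  "spectral_sym m n A l \<longleftrightarrow>
     eigenvalues m n A = (\<lambda>z. cis (2 * pi / real l) * z) ` eigenvalues m n A"

text \<open>(P A Q) for diagonal P, Q given by their diagonals p, q.\<close>
definition tensor_PQ :: "(nat \<Rightarrow> complex) \<Rightarrow> (nat list \<Rightarrow> real) \<Rightarrow> (nat \<Rightarrow> complex) \<Rightarrow> nat list \<Rightarrow> complex" where
  "tensor_PQ p A q is = p (hd is) * complex_of_real (A is) * prod_list (map q (tl is))"

definition Dset :: "nat \<Rightarrow> nat \<Rightarrow> (nat list \<Rightarrow> real) \<Rightarrow> nat \<Rightarrow> nat \<Rightarrow> complex mat set" where
  "Dset m n A l j = {D. D \<in> carrier_mat n n \<and> diagonal_mat D \<and> invertible_mat D \<and> D $$ (0, 0) = 1 \<and>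
      (\<forall>is \<in> tidx m n. complex_of_real (A is) =
          cis (- 2 * pi * real j / real l) *
          tensor_PQ (\<lambda>i. inverse ((D $$ (i, i)) ^ (m - 1))) A (\<lambda>i. D $$ (i, i)) is)}"

definition Dall :: "nat \<Rightarrow> nat \<Rightarrow> (nat list \<Rightarrow> real) \<Rightarrow> nat \<Rightarrow> complex mat set" where
  "Dall m n A l = (\<Union>j < l. Dset m n A l j)"

definition lam_j :: "nat \<Rightarrow> nat \<Rightarrow> (nat list \<Rightarrow> real) \<Rightarrow> nat \<Rightarrow> nat \<Rightarrow> complex" where
  "lam_j m n A l j = complex_of_real (spec_radius m n A) * cis (2 * pi * real j / real l)"

definition PVj :: "nat \<Rightarrow> nat \<Rightarrow> (nat list \<Rightarrow> real) \<Rightarrow> nat \<Rightarrow> nat \<Rightarrow> complex vec set" where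
  "PVj m n A l j = {y. is_eigenpair m n A (lam_j m n A l j) y \<and> y $ 0 = 1}"

definition PV :: "nat \<Rightarrow> nat \<Rightarrow> (nat list \<Rightarrow> real) \<Rightarrow> nat \<Rightarrow> complex vec set" where
  "PV m n A l = (\<Union>j < l. PVj m n A l j)"

definition vp :: "nat \<Rightarrow> nat \<Rightarrow> (nat list \<Rightarrow> real) \<Rightarrow> nat \<Rightarrow> complex vec" where
  "vp m n A l = (THE y. y \<in> PVj m n A l 0 \<and> (\<forall>i < n. y $ i \<in> \<real> \<and> 0 < Re (y $ i)))"

definition Dy :: "nat \<Rightarrow> complex vec \<Rightarrow> complex mat" where
  "Dy n y = mat n n (\<lambda>(i, k). if i = k then y $ i / complex_of_real (cmod (y $ i)) else 0)"

definition circ :: "nat \<Rightarrow> nat \<Rightarrow> (nat list \<Rightarrow> real) \<Rightarrow> nat \<Rightarrow> complex vec \<Rightarrow> complex vec \<Rightarrow> complex vec" where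
  "circ m n A l y z = Dy n y *\<^sub>v (Dy n z *\<^sub>v vp m n A l)"

definition PV_group :: "nat \<Rightarrow> nat \<Rightarrow> (nat list \<Rightarrow> real) \<Rightarrow> nat \<Rightarrow> complex vec monoid" where
  "PV_group m n A l = \<lparr>carrier = PV m n A l, mult = circ m n A l, one = vp m n A l\<rparr>"

definition D_group :: "nat \<Rightarrow> nat \<Rightarrow> (nat list \<Rightarrow> real) \<Rightarrow> nat \<Rightarrow> complex mat monoid" where
  "D_group m n A l = \<lparr>carrier = Dall m n A l, mult = (*), one = 1\<^sub>m n\<rparr>"

end

theory Submission
  imports Defs "HOL-Analysis.Function_Topology" "Jordan_Normal_Form.Determinant"
begin

definition Ar :: "nat \<Rightarrow> nat \<Rightarrow> (nat list \<Rightarrow> real) \<Rightarrow> (nat \<Rightarrow> real) \<Rightarrow> nat \<Rightarrow> real" where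
  "Ar m n A x i = (\<Sum>js\<in>tidx (m-1) n. A (i#js) * prod_list (map x js))"

lemma finite_tidx[simp]: "finite (tidx k n)"
proof -
  have "tidx k n = {xs. set xs \<subseteq> {..<n} \<and> length xs = k}" unfolding tidx_def by auto
  then show ?thesis using finite_lists_length_eq[of "{..<n}" k] by simp
qed

lemma tidx_Cons: "m \<ge> 1 \<Longrightarrow> (i#js \<in> tidx m n) = (i < n \<and> js \<in> tidx (m-1) n)"
  unfolding tidx_def by auto

lemma tidx_length: "js \<in> tidx k n \<Longrightarrow> length js = k"
  unfolding tidx_def by auto

lemma tidx_set: "js \<in> tidx k n \<Longrightarrow> j \<in> set js \<Longrightarrow> j < n"
  unfolding tidx_def by auto

lemma nonneg_entry: "tensor_nonneg m n A \<Longrightarrow> m \<ge> 1 \<Longrightarrow> i < n \<Longrightarrow> js \<in> tidx (m-1) n \<Longrightarrow> 0 \<le> A (i#js)"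
  unfolding tensor_nonneg_def using tidx_Cons by blast

lemma pl_nonneg: "(\<forall>k\<in>set js. 0 \<le> (x k::real)) \<Longrightarrow> 0 \<le> prod_list (map x js)"
  by (induction js) auto

lemma pl_pos: "(\<forall>k\<in>set js. 0 < (x k::real)) \<Longrightarrow> 0 < prod_list (map x js)"
  by (induction js) auto

lemma pl_mono: "(\<forall>k\<in>set js. 0 \<le> x k \<and> x k \<le> (y::nat\<Rightarrow>real) k) \<Longrightarrow> prod_list (map x js) \<le> prod_list (map y js)"
proof (induction js)
  case Nil then show ?case by simp
next
  case (Cons a js)
  then have "prod_list (map x js) \<le> prod_list (map y js)" "0 \<le> prod_list (map x js)" "0 \<le> x a" "x a \<le> y a"
    using pl_nonneg[of js x] by auto
  then show ?case by (simp add: mult_mono)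
qed

lemma pl_strict: "(\<forall>k\<in>set js. 0 < x k \<and> x k \<le> (y::nat\<Rightarrow>real) k) \<Longrightarrow> j \<in> set js \<Longrightarrow> x j < y j
   \<Longrightarrow> prod_list (map x js) < prod_list (map y js)"
proof (induction js)
  case Nil then show ?case by simp
next
  case (Cons a js)
  have px: "0 < prod_list (map x js)" using Cons.prems pl_pos[of js x] by auto
  have py: "0 < prod_list (map y js)" using Cons.prems pl_pos[of js y] by force
  have le: "prod_list (map x js) \<le> prod_list (map y js)" using Cons.prems by (intro pl_mono) (auto simp: less_imp_le)
  show ?case
  proof (cases "j = a")
    case True
    then have "x a < y a" using Cons.prems by simp
    then have "x a * prod_list (map x js) < y a * prod_list (map x js)" using px by simp
    also have "\<dots> \<le> y a * prod_list (map y js)" using le Cons.prems by (simp add: mult_left_mono)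
    finally show ?thesis by simp
  next
    case False
    then have "prod_list (map x js) < prod_list (map y js)" using Cons by auto
    then have "x a * prod_list (map x js) < x a * prod_list (map y js)" using Cons.prems by simp
    also have "\<dots> \<le> y a * prod_list (map y js)" using py Cons.prems by (simp add: mult_right_mono)
    finally show ?thesis by simp
  qed
qed

lemma pl_eq: "(\<forall>k\<in>set js. 0 \<le> x k \<and> x k \<le> (y::nat\<Rightarrow>real) k \<and> 0 < y k) \<Longrightarrow>
   prod_list (map x js) = prod_list (map y js) \<Longrightarrow> j \<in> set js \<Longrightarrow> x j = y j"
proof (induction js)
  case Nil then show ?case by simp
next
  case (Cons a js)
  have px: "0 \<le> prod_list (map x js)" using Cons.prems pl_nonneg[of js x] by auto
  have py: "0 < prod_list (map y js)" using Cons.prems pl_pos[of js y] by force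
  have le: "prod_list (map x js) \<le> prod_list (map y js)" using Cons.prems pl_mono[of js x y] by auto
  have xa: "x a = y a"
  proof (rule ccontr)
    assume "x a \<noteq> y a"
    then have "x a < y a" using Cons.prems by auto
    have "x a * prod_list (map x js) \<le> x a * prod_list (map y js)" using le Cons.prems by (intro mult_left_mono) auto
    also have "\<dots> < y a * prod_list (map y js)" using py \<open>x a < y a\<close> by simp
    finally have "x a * prod_list (map x js) < y a * prod_list (map y js)" .
    with Cons.prems show False by simp
  qed
  then have "y a * prod_list (map x js) = y a * prod_list (map y js)" using Cons.prems by auto
  then have "prod_list (map x js) = prod_list (map y js)" using Cons.prems by auto
  then show ?case using Cons xa by auto
qed

lemma pl_scale: "prod_list (map (\<lambda>k. c * (x k::real)) js) = c ^ length js * prod_list (map x js)"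
  by (induction js) (auto simp: algebra_simps)

lemma pl_ge1: "(\<forall>k\<in>set js. 1 \<le> (x k::real)) \<Longrightarrow> 1 \<le> prod_list (map x js)"
proof (induction js)
  case Nil then show ?case by simp
next
  case (Cons a js)
  then show ?case using mult_mono[of 1 "x a" 1 "prod_list (map x js)"] by simp
qed

lemma pl_ge_member: "(\<forall>k\<in>set js. 1 \<le> (x k::real)) \<Longrightarrow> j \<in> set js \<Longrightarrow> x j \<le> prod_list (map x js)"
proof (induction js)
  case Nil then show ?case by simp
next
  case (Cons a js)
  have g1: "1 \<le> prod_list (map x js)"
    using Cons.prems pl_ge1[of js x] by auto
  show ?case
  proof (cases "j = a")
    case True
    then show ?thesis using g1 Cons.prems by (simp add: mult_le_cancel_left1)
  next
    case False
    then have "x j \<le> prod_list (map x js)" using Cons by auto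
    also have "\<dots> \<le> x a * prod_list (map x js)" using Cons.prems g1 by (simp add: mult_le_cancel_right1)
    finally show ?thesis by simp
  qed
qed

lemma pl_cong: "(\<forall>k\<in>set js. x k = y k) \<Longrightarrow> prod_list (map x js) = prod_list (map y js)"
  by (induction js) auto

context
  fixes m n :: nat and A :: "nat list \<Rightarrow> real"
  assumes m2: "m \<ge> 2" and nn: "tensor_nonneg m n A"
begin

lemma entry_nonneg: "i < n \<Longrightarrow> js \<in> tidx (m-1) n \<Longrightarrow> 0 \<le> A (i#js)"
  using nonneg_entry[OF nn] m2 by auto

lemma Ar_nonneg: "i < n \<Longrightarrow> (\<forall>k<n. 0 \<le> x k) \<Longrightarrow> 0 \<le> Ar m n A x i"
  unfolding Ar_def
  by (intro sum_nonneg mult_nonneg_nonneg entry_nonneg pl_nonneg) (auto dest: tidx_set)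

lemma Ar_mono: "i < n \<Longrightarrow> (\<forall>k<n. 0 \<le> x k \<and> x k \<le> y k) \<Longrightarrow> Ar m n A x i \<le> Ar m n A y i"
  unfolding Ar_def
  by (intro sum_mono mult_left_mono entry_nonneg pl_mono) (auto dest: tidx_set)

lemma Ar_cong: "(\<forall>k<n. x k = y k) \<Longrightarrow> Ar m n A x i = Ar m n A y i"
  unfolding Ar_def by (intro sum.cong refl arg_cong2[where f="(*)"] pl_cong) (auto dest: tidx_set)

lemma Ar_scale: "Ar m n A (\<lambda>k. c * x k) i = c ^ (m-1) * Ar m n A x i"
  unfolding Ar_def sum_distrib_left
  by (intro sum.cong refl) (auto simp: pl_scale tidx_length)

lemma Ar_strict:
  assumes "k < n" "(k, j) \<in> tensor_arcs m n A" "\<forall>i<n. 0 < x i \<and> x i \<le> y i" "x j < y j"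
  shows "Ar m n A x k < Ar m n A y k"
proof -
  from assms(2) obtain js where js: "js \<in> tidx (m-1) n" "A (k#js) \<noteq> 0" "j \<in> set js"
    unfolding tensor_arcs_def by auto
  have pos: "0 < A (k#js)" using js entry_nonneg[OF assms(1) js(1)] by auto
  show ?thesis unfolding Ar_def
  proof (rule sum_strict_mono_ex1)
    show "finite (tidx (m-1) n)" by simp
    show "\<forall>js\<in>tidx (m - 1) n. A (k # js) * prod_list (map x js) \<le> A (k # js) * prod_list (map y js)"
      using assms(1,3) by (auto intro!: mult_left_mono entry_nonneg pl_mono dest: tidx_set)
    have "prod_list (map x js) < prod_list (map y js)"
      using assms(3,4) js by (intro pl_strict) (auto dest: tidx_set)
    then show "\<exists>js\<in>tidx (m - 1) n. A (k # js) * prod_list (map x js) < A (k # js) * prod_list (map y js)"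
      using js pos by (intro bexI[OF _ js(1)]) (simp add: mult_strict_left_mono)
  qed
qed

end

lemma cont_Max:
  assumes "finite I" "I \<noteq> {}" "\<forall>i\<in>I. continuous_map X euclideanreal (f i)"
  shows "continuous_map X euclideanreal (\<lambda>x. Max ((\<lambda>i. f i x) ` I))"
  using assms
proof (induction I rule: finite_ne_induct)
  case (singleton a) then show ?case by simp
next
  case (insert a F)
  have "(\<lambda>x. Max ((\<lambda>i. f i x) ` insert a F)) = (\<lambda>x. max (f a x) (Max ((\<lambda>i. f i x) ` F)))"
    using insert by (auto simp: Max_insert)
  then show ?case using insert by (auto intro!: continuous_map_real_max)
qed

lemma cont_pl:
  "set js \<subseteq> I \<Longrightarrow> continuous_map (product_topology (\<lambda>_. euclideanreal) I) euclideanreal (\<lambda>x. prod_list (map x js))"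
proof (induction js)
  case Nil then show ?case by simp
next
  case (Cons a js)
  have "continuous_map (product_topology (\<lambda>_. euclideanreal) I) euclideanreal (\<lambda>x. x a)"
    using Cons.prems continuous_map_product_projection[of a I "\<lambda>_. euclideanreal"] by simp
  then show ?case using Cons by (auto intro!: continuous_map_real_mult)
qed

context
  fixes m n :: nat and A :: "nat list \<Rightarrow> real"
  assumes m2: "m \<ge> 2" and nn: "tensor_nonneg m n A"
begin

lemma arc_into:
  assumes wi: "weakly_irreducible m n A" and S: "S \<subseteq> {..<n}" "S \<noteq> {}" "S \<noteq> {..<n}"
  shows "\<exists>a b. a < n \<and> a \<notin> S \<and> b \<in> S \<and> (a,b) \<in> tensor_arcs m n A"
proof -
  obtain a0 where a0: "a0 < n" "a0 \<notin> S" using S by auto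
  obtain b0 where b0: "b0 \<in> S" using S by auto
  have "b0 < n" using b0 S by auto
  then have "(a0, b0) \<in> (tensor_arcs m n A)\<^sup>*" using wi a0 unfolding weakly_irreducible_def by auto
  then have "a0 \<notin> S \<longrightarrow> (\<exists>a b. a < n \<and> a \<notin> S \<and> b \<in> S \<and> (a,b) \<in> tensor_arcs m n A)"
  proof (induction rule: converse_rtrancl_induct)
    case base then show ?case using b0 by auto
  next
    case (step y z)
    have "y < n" using step(1) unfolding tensor_arcs_def by auto
    then show ?case using step by blast
  qed
  then show ?thesis using a0 by blast
qed

lemma grow:
  assumes x: "\<forall>i<n. 0 < x i" and sub: "\<forall>i<n. Ar m n A x i \<le> \<rho> * x i ^ (m-1)"
    and j: "j < n" "Ar m n A x j < \<rho> * x j ^ (m-1)"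
    and k: "k < n" "(k, j) \<in> tensor_arcs m n A" "\<not> Ar m n A x k < \<rho> * x k ^ (m-1)"
  shows "\<exists>x'. (\<forall>i<n. 0 < x' i) \<and> (\<forall>i<n. Ar m n A x' i \<le> \<rho> * x' i ^ (m-1)) \<and>
     (\<forall>i<n. Ar m n A x i < \<rho> * x i ^ (m-1) \<longrightarrow> Ar m n A x' i < \<rho> * x' i ^ (m-1)) \<and>
     Ar m n A x' k < \<rho> * x' k ^ (m-1)"
proof -
  define p where "p = x j ^ (m-1)"
  have p: "0 < p" using x j unfolding p_def by auto
  have a0: "0 \<le> Ar m n A x j" using Ar_nonneg[OF m2 nn j(1)] x by (auto simp: less_imp_le)
  have rp: "0 < \<rho> * p" using j a0 unfolding p_def by linarith
  define q where "q = Ar m n A x j / (\<rho> * p)"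
  have j2: "Ar m n A x j < \<rho> * p" using j unfolding p_def by simp
  have q0: "0 \<le> q" unfolding q_def using a0 rp by (simp add: divide_nonneg_pos)
  have q1: "q < 1" unfolding q_def using rp j2 by (simp add: divide_less_eq)
  define c where "c = root (m-1) ((1+q)/2)"
  have m1: "0 < m - 1" using m2 by auto
  have cpow: "c ^ (m-1) = (1+q)/2" unfolding c_def using m1 q0 by simp
  have c0: "0 < c" unfolding c_def using m1 q0 by (simp add: real_root_gt_zero)
  have c1: "c < 1" unfolding c_def using m1 q1 by (simp add: real_root_lt_1_iff)
  define x' where "x' = x(j := c * x j)"
  have x'pos: "\<forall>i<n. 0 < x' i" using x c0 j unfolding x'_def by auto
  have x'le: "\<forall>i<n. 0 < x' i \<and> x' i \<le> x i" using x'pos x c1 j unfolding x'_def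
    by (auto simp: mult_le_cancel_right1 less_imp_le)
  have Armono: "Ar m n A x' i \<le> Ar m n A x i" if "i < n" for i
    using Ar_mono[OF m2 nn that] x'le by (auto simp: less_imp_le)
  have jj: "Ar m n A x' j < \<rho> * x' j ^ (m-1)"
  proof -
    have "Ar m n A x' j \<le> Ar m n A x j" using Armono j by auto
    also have "\<dots> = q * (\<rho> * p)" unfolding q_def using rp by (metis less_irrefl nonzero_eq_divide_eq)
    also have "\<dots> < ((1+q)/2) * (\<rho> * p)" using q1 rp by (intro mult_strict_right_mono) auto
    also have "\<dots> = \<rho> * x' j ^ (m-1)" unfolding x'_def p_def using cpow
      by (simp add: power_mult_distrib)
    finally show ?thesis .
  qed
  have kj: "k \<noteq> j" using j k by auto
  have kk: "Ar m n A x' k < \<rho> * x' k ^ (m-1)"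
  proof -
    have "x' j < x j" using x j c1 unfolding x'_def by simp
    then have "Ar m n A x' k < Ar m n A x k" using Ar_strict[OF m2 nn k(1) k(2)] x'le by auto
    also have "\<dots> \<le> \<rho> * x' k ^ (m-1)" using sub k kj unfolding x'_def by auto
    finally show ?thesis .
  qed
  show ?thesis
  proof (intro exI[of _ x'] conjI allI impI)
    show "0 < x' i" if "i < n" for i using x'pos that by auto
    show "Ar m n A x' i \<le> \<rho> * x' i ^ (m-1)" if "i < n" for i
    proof (cases "i = j")
      case True then show ?thesis using jj by auto
    next
      case False then show ?thesis using Armono[OF that] sub that unfolding x'_def by force
    qed
    show "Ar m n A x' i < \<rho> * x' i ^ (m-1)" if "i < n" "Ar m n A x i < \<rho> * x i ^ (m-1)" for i
    proof (cases "i = j")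
      case True then show ?thesis using jj by auto
    next
      case False then show ?thesis using Armono[OF that(1)] that unfolding x'_def by force
    qed
    show "Ar m n A x' k < \<rho> * x' k ^ (m-1)" by (rule kk)
  qed
qed

end

context
  fixes m n :: nat and A :: "nat list \<Rightarrow> real"
  assumes m2: "m \<ge> 2" and nn: "tensor_nonneg m n A"
begin
lemma all_strict:
  assumes wi: "weakly_irreducible m n A"
    and x: "\<forall>i<n. 0 < x i" and sub: "\<forall>i<n. Ar m n A x i \<le> \<rho> * x i ^ (m-1)"
    and j: "j < n" "Ar m n A x j < \<rho> * x j ^ (m-1)"
  shows "\<exists>x'. (\<forall>i<n. 0 < x' i) \<and> (\<forall>i<n. Ar m n A x' i < \<rho> * x' i ^ (m-1))"
proof -
  define St where "St x = {i. i < n \<and> Ar m n A x i < \<rho> * x i ^ (m-1)}" for x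
  have StS: "St x \<subseteq> {..<n}" for x unfolding St_def by auto
  have fin: "finite (St x)" for x using StS finite_subset by blast
  have main: "k \<le> n \<longrightarrow> (\<exists>x'. (\<forall>i<n. 0 < x' i) \<and> (\<forall>i<n. Ar m n A x' i \<le> \<rho> * x' i ^ (m-1))
              \<and> St x' \<noteq> {} \<and> k \<le> card (St x'))" for k
  proof (induction k)
    case 0 then show ?case using x sub j unfolding St_def by (intro impI exI[of _ x]) auto
  next
    case (Suc k)
    show ?case
    proof
      assume kn: "Suc k \<le> n"
      then obtain x' where x': "\<forall>i<n. 0 < x' i" "\<forall>i<n. Ar m n A x' i \<le> \<rho> * x' i ^ (m-1)"
        "St x' \<noteq> {}" "k \<le> card (St x')" using Suc by auto
      show "\<exists>x''. (\<forall>i<n. 0 < x'' i) \<and> (\<forall>i<n. Ar m n A x'' i \<le> \<rho> * x'' i ^ (m-1))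
              \<and> St x'' \<noteq> {} \<and> Suc k \<le> card (St x'')"
      proof (cases "Suc k \<le> card (St x')")
        case True then show ?thesis using x' by blast
      next
        case False
        then have "card (St x') < n" using x' kn by auto
        then have "St x' \<noteq> {..<n}" by (metis card_lessThan less_irrefl)
        then obtain a b where ab: "a < n" "a \<notin> St x'" "b \<in> St x'" "(a,b) \<in> tensor_arcs m n A"
          using arc_into[OF m2 nn wi StS x'(3)] by blast
        obtain x'' where x'': "\<forall>i<n. 0 < x'' i" "\<forall>i<n. Ar m n A x'' i \<le> \<rho> * x'' i ^ (m-1)"
          "\<forall>i<n. Ar m n A x' i < \<rho> * x' i ^ (m-1) \<longrightarrow> Ar m n A x'' i < \<rho> * x'' i ^ (m-1)"
          "Ar m n A x'' a < \<rho> * x'' a ^ (m-1)"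
          using grow[OF m2 nn x'(1,2), of b a] ab unfolding St_def by auto
        have sub2: "insert a (St x') \<subseteq> St x''" using x'' ab unfolding St_def by auto
        have "Suc k \<le> card (insert a (St x'))" using ab x' fin by auto
        also have "\<dots> \<le> card (St x'')" using sub2 fin card_mono by blast
        finally show ?thesis using x'' sub2 by blast
      qed
    qed
  qed
  obtain x' where x': "\<forall>i<n. 0 < x' i" "n \<le> card (St x')" using main[of n] by auto
  then have "St x' = {..<n}" using card_seteq[OF _ StS] by auto
  then show ?thesis using x' unfolding St_def by blast
qed

lemma reach_bound:
  fixes z :: "nat \<Rightarrow> real" and R amin :: real
  assumes amin: "0 < amin" "\<forall>is\<in>tidx m n. A is \<noteq> 0 \<longrightarrow> amin \<le> A is"
    and R: "0 \<le> R" and z1: "\<forall>i<n. 1 \<le> z i" and sub: "\<forall>i<n. Ar m n A z i \<le> R * z i ^ (m-1)"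
    and i0: "i0 < n" "z i0 = 1" and h_def: "h = (\<lambda>b::real. max b (R * b^(m-1)/amin))"
  shows "(i0, j) \<in> tensor_arcs m n A ^^ k \<Longrightarrow> z j \<le> (h ^^ k) 1"
proof (induction k arbitrary: j)
  case 0 then show ?case using i0 by simp
next
  case (Suc k)
  from Suc.prems obtain b where b: "(i0, b) \<in> tensor_arcs m n A ^^ k" "(b, j) \<in> tensor_arcs m n A"
    by auto
  have IH: "z b \<le> (h ^^ k) 1" using Suc.IH b by auto
  from b(2) obtain js where js: "b < n" "j < n" "js \<in> tidx (m-1) n" "A (b#js) \<noteq> 0" "j \<in> set js"
    unfolding tensor_arcs_def by auto
  have bjs: "b#js \<in> tidx m n" using js tidx_Cons[of m b js n] m2 by auto
  have al: "amin \<le> A (b#js)" using amin bjs js by auto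
  have zj: "z j \<le> prod_list (map z js)" using pl_ge_member[of js z j] js z1 by (auto dest: tidx_set)
  have zjpos: "0 \<le> z j" using z1 js by (meson order_trans zero_le_one)
  have trm: "A (b#js) * prod_list (map z js) \<le> Ar m n A z b"
    unfolding Ar_def
  proof (rule member_le_sum[of js, OF js(3)])
    have zz: "\<forall>k<n. 0 \<le> z k" using z1 by (meson order_trans zero_le_one)
    fix ks assume "ks \<in> tidx (m-1) n - {js}"
    then have "ks \<in> tidx (m-1) n" by auto
    then show "0 \<le> A (b#ks) * prod_list (map z ks)"
      using zz js(1) by (intro mult_nonneg_nonneg entry_nonneg[OF m2 nn] pl_nonneg) (auto dest: tidx_set)
  qed simp
  have zb0: "0 \<le> z b" using z1 js by (meson order_trans zero_le_one)
  have "amin * z j \<le> A (b#js) * z j" using al zjpos by (simp add: mult_right_mono)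
  also have "\<dots> \<le> A (b#js) * prod_list (map z js)" using zj al amin by (intro mult_left_mono) auto
  also have "\<dots> \<le> R * z b ^ (m-1)" using trm sub js by (meson order_trans)
  also have "\<dots> \<le> R * ((h ^^ k) 1) ^ (m-1)" using IH zb0 R by (intro mult_left_mono power_mono) auto
  finally have "z j \<le> R * ((h ^^ k) 1) ^ (m-1) / amin" using amin by (subst pos_le_divide_eq) (auto simp: mult.commute)
  also have "\<dots> \<le> h ((h ^^ k) 1)" unfolding h_def by simp
  finally have "z j \<le> h ((h ^^ k) 1)" .
  then show ?case by (metis comp_apply funpow.simps(2))
qed

end

context
  fixes m n :: nat and A :: "nat list \<Rightarrow> real"
  assumes m2: "m \<ge> 2" and nn: "tensor_nonneg m n A"
begin

lemma exists_pos_eig: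
  assumes wi: "weakly_irreducible m n A" and n1: "n \<ge> 1"
  shows "\<exists>x r. (\<forall>i<n. 0 < x i) \<and> 0 \<le> r \<and> (\<forall>i<n. Ar m n A x i = r * x i ^ (m-1))"
proof -
  let ?arcs = "tensor_arcs m n A"
  have m1: "0 < m - 1" using m2 by auto
  define amin where "amin = Min (insert 1 (A ` {is \<in> tidx m n. A is \<noteq> 0}))"
  have finS: "finite (insert 1 (A ` {is \<in> tidx m n. A is \<noteq> 0}))" by simp
  have amin_pos: "0 < amin" unfolding amin_def Min_gr_iff[OF finS insert_not_empty]
    using nn unfolding tensor_nonneg_def by force
  have amin_le: "\<forall>is\<in>tidx m n. A is \<noteq> 0 \<longrightarrow> amin \<le> A is"
    unfolding amin_def using Min_le[OF finS] by blast
  define g where "g x = Max ((\<lambda>i. Ar m n A x i / (max 1 (x i))^(m-1)) ` {..<n})" for x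
  define ones where "ones = restrict (\<lambda>_. 1::real) {..<n}"
  define R where "R = g ones"
  have "0 \<in> {..<n}" using n1 by simp
  then have ne: "{..<n} \<noteq> {}" by blast
  have ratio: "Ar m n A x i / x i ^ (m-1) \<le> g x" if "i < n" "\<forall>i<n. 1 \<le> x i" for x i
  proof -
    have "max 1 (x i) = x i" using that by auto
    then show ?thesis unfolding g_def using that by (intro Max_ge) auto
  qed
  have R0: "0 \<le> R"
  proof -
    have "0 \<le> Ar m n A ones 0" using Ar_nonneg[OF m2 nn, of 0 ones] n1 unfolding ones_def by auto
    also have "\<dots> = Ar m n A ones 0 / ones 0 ^ (m-1)" using n1 unfolding ones_def by auto
    also have "\<dots> \<le> R" unfolding R_def using ratio[of 0 ones] n1 unfolding ones_def by auto
    finally show ?thesis .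
  qed
  define h where "h = (\<lambda>b::real. max b (R * b^(m-1)/amin))"
  define C where "C = Max ((\<lambda>(i,j). (h ^^ (SOME k. (i,j) \<in> ?arcs ^^ k)) 1) ` ({..<n}\<times>{..<n}))"
  have hge: "1 \<le> (h ^^ k) 1" for k
  proof (induction k)
    case 0 then show ?case by simp
  next
    case (Suc k) then show ?case unfolding h_def by (simp add: le_max_iff_disj)
  qed
  have finC: "finite ((\<lambda>(i,j). (h ^^ (SOME k. (i,j) \<in> ?arcs ^^ k)) 1) ` ({..<n}\<times>{..<n}))" by simp
  have C1: "1 \<le> C"
  proof -
    have "(h ^^ (SOME k. (0,0) \<in> ?arcs ^^ k)) 1 \<le> C"
      unfolding C_def using n1 by (intro Max_ge[OF finC]) force
    then show ?thesis using hge order_trans by blast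
  qed
  have bound: "\<forall>j<n. z j \<le> C" if z1: "\<forall>i<n. 1 \<le> z i" and i0: "i0 < n" "z i0 = 1"
      and sub: "\<forall>i<n. Ar m n A z i \<le> R * z i^(m-1)" for z i0
  proof (intro allI impI)
    fix j assume j: "j < n"
    have "(i0, j) \<in> ?arcs\<^sup>*" using wi i0 j unfolding weakly_irreducible_def by auto
    then have "\<exists>k. (i0, j) \<in> ?arcs ^^ k" using rtrancl_power by blast
    then have k: "(i0, j) \<in> ?arcs ^^ (SOME k. (i0,j) \<in> ?arcs ^^ k)" by (rule someI_ex)
    have "z j \<le> (h ^^ (SOME k. (i0,j) \<in> ?arcs ^^ k)) 1"
      using reach_bound[OF m2 nn amin_pos amin_le R0 z1 sub i0 h_def k] .
    also have "\<dots> \<le> C" unfolding C_def using i0 j by (intro Max_ge[OF finC]) force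
    finally show "z j \<le> C" .
  qed
  define K where "K = PiE {..<n} (\<lambda>_. {1..C})"
  define P where "P = product_topology (\<lambda>_. euclideanreal) {..<n}"
  have contAr: "continuous_map P euclideanreal (\<lambda>x. Ar m n A x i)" for i
    unfolding Ar_def P_def
    by (intro continuous_map_sum continuous_map_real_mult cont_pl) (auto dest: tidx_set)
  have cont: "continuous_map P euclideanreal g"
    unfolding g_def
  proof (rule cont_Max[OF _ ne], simp, intro ballI)
    fix i assume i: "i \<in> {..<n}"
    have "continuous_map P euclideanreal (\<lambda>x. x i)"
      unfolding P_def using continuous_map_product_projection[of i "{..<n}" "\<lambda>_. euclideanreal"] i by simp
    then show "continuous_map P euclideanreal (\<lambda>x. Ar m n A x i / max 1 (x i) ^ (m - 1))"
      by (intro continuous_map_real_divide contAr continuous_map_real_pow continuous_map_real_max) auto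
  qed
  have "compactin P K" unfolding P_def K_def by (subst compactin_PiE) auto
  then have "compactin euclideanreal (g ` K)" using image_compactin cont by blast
  then have cpt: "compact (g ` K)" by (simp add: compactin_euclidean_iff)
  have onesK: "ones \<in> K" unfolding ones_def K_def using C1 by auto
  obtain s where s: "s \<in> g ` K" "\<forall>t\<in>g ` K. s \<le> t" using compact_attains_inf[OF cpt] onesK by blast
  then obtain xs where xs: "xs \<in> K" "\<forall>y\<in>K. g xs \<le> g y" by auto
  define rho where "rho = g xs"
  have xs1: "\<forall>i<n. 1 \<le> xs i" using xs unfolding K_def by auto
  have xspos: "\<forall>i<n. 0 < xs i"
  proof (intro allI impI)
    fix i assume "i < n" then have "1 \<le> xs i" using xs1 by auto
    then show "0 < xs i" by linarith
  qed
  have sub: "\<forall>i<n. Ar m n A xs i \<le> rho * xs i ^ (m-1)"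
  proof (intro allI impI)
    fix i assume i: "i < n"
    have "Ar m n A xs i / xs i ^ (m-1) \<le> rho" unfolding rho_def using ratio i xs1 by auto
    then show "Ar m n A xs i \<le> rho * xs i ^ (m-1)" using xspos i by (simp add: pos_divide_le_eq)
  qed
  have rhoR: "rho \<le> R" unfolding rho_def R_def using xs onesK by auto
  have minimal: "rho \<le> r" if z: "\<forall>i<n. 0 < z i" and zs: "\<forall>i<n. Ar m n A z i \<le> r * z i^(m-1)"
     and rR: "r \<le> R" for z r
  proof -
    define \<mu> where "\<mu> = Min (z ` {..<n})"
    have fz: "finite (z ` {..<n})" "z ` {..<n} \<noteq> {}" using ne by auto
    have mu0: "0 < \<mu>" unfolding \<mu>_def using z fz by auto
    obtain i0 where i0: "i0 < n" "z i0 = \<mu>" using Min_in[OF fz] unfolding \<mu>_def by auto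
    have mule: "\<mu> \<le> z i" if "i < n" for i unfolding \<mu>_def using fz that by auto
    define z' where "z' = restrict (\<lambda>i. z i / \<mu>) {..<n}"
    have z'1: "\<forall>i<n. 1 \<le> z' i" unfolding z'_def using mule mu0 by auto
    have z'i0: "z' i0 = 1" unfolding z'_def using i0 mu0 by auto
    have Arz': "Ar m n A z' i = (1/\<mu>)^(m-1) * Ar m n A z i" for i
    proof -
      have "Ar m n A z' i = Ar m n A (\<lambda>k. (1/\<mu>) * z k) i"
        by (rule Ar_cong[OF m2 nn]) (simp add: z'_def)
      also have "\<dots> = (1/\<mu>)^(m-1) * Ar m n A z i" by (rule Ar_scale[OF m2 nn])
      finally show ?thesis .
    qed
    have z'sub: "\<forall>i<n. Ar m n A z' i \<le> r * z' i^(m-1)"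
    proof (intro allI impI)
      fix i assume i: "i < n"
      have "Ar m n A z' i \<le> (1/\<mu>)^(m-1) * (r * z i^(m-1))"
        unfolding Arz' using zs i mu0 by (intro mult_left_mono) auto
      also have "\<dots> = r * z' i^(m-1)" unfolding z'_def using i by (simp add: power_divide)
      finally show "Ar m n A z' i \<le> r * z' i^(m-1)" .
    qed
    have z'R: "\<forall>i<n. Ar m n A z' i \<le> R * z' i^(m-1)"
    proof (intro allI impI)
      fix i assume i: "i < n"
      have "1 \<le> z' i" using z'1 i by auto
      then have "0 \<le> z' i ^ (m-1)" by simp
      then show "Ar m n A z' i \<le> R * z' i^(m-1)" using z'sub i rR by (meson mult_right_mono order_trans)
    qed
    have z'K: "z' \<in> K" unfolding K_def using bound[OF z'1 i0(1) z'i0 z'R] z'1 unfolding z'_def by auto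
    have "g z' \<le> r" unfolding g_def
    proof (subst Max_le_iff, simp, simp add: ne, intro ballI)
      fix a assume "a \<in> (\<lambda>i. Ar m n A z' i / max 1 (z' i) ^ (m - 1)) ` {..<n}"
      then obtain i where i: "i < n" "a = Ar m n A z' i / max 1 (z' i) ^ (m - 1)" by auto
      have "max 1 (z' i) = z' i" using z'1 i by auto
      moreover have "1 \<le> z' i" using z'1 i by auto
      then have "0 < z' i ^ (m-1)" by simp
      ultimately show "a \<le> r" using i z'sub by (simp add: pos_divide_le_eq)
    qed
    then show "rho \<le> r" using xs z'K unfolding rho_def by (meson order_trans)
  qed
  have eig: "\<forall>i<n. Ar m n A xs i = rho * xs i ^ (m-1)"
  proof (rule ccontr)
    assume "\<not> ?thesis"
    then obtain j where j: "j < n" "Ar m n A xs j < rho * xs j ^ (m-1)" using sub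
      by (meson less_le)
    obtain x' where x': "\<forall>i<n. 0 < x' i" "\<forall>i<n. Ar m n A x' i < rho * x' i ^ (m-1)"
      using all_strict[OF m2 nn wi xspos sub j] by blast
    define r' where "r' = Max ((\<lambda>i. Ar m n A x' i / x' i ^ (m-1)) ` {..<n})"
    have fr: "finite ((\<lambda>i. Ar m n A x' i / x' i ^ (m-1)) ` {..<n})" "(\<lambda>i. Ar m n A x' i / x' i ^ (m-1)) ` {..<n} \<noteq> {}"
      using ne by auto
    have r'lt: "r' < rho" unfolding r'_def Max_less_iff[OF fr]
      using x' by (auto simp: pos_divide_less_eq)
    have r'sub: "\<forall>i<n. Ar m n A x' i \<le> r' * x' i^(m-1)"
    proof (intro allI impI)
      fix i assume i: "i < n"
      have "Ar m n A x' i / x' i ^ (m-1) \<le> r'" unfolding r'_def using fr i by (intro Max_ge) auto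
      then show "Ar m n A x' i \<le> r' * x' i^(m-1)" using x' i by (simp add: pos_divide_le_eq)
    qed
    have "rho \<le> r'" using minimal[OF x'(1) r'sub] r'lt rhoR by auto
    then show False using r'lt by auto
  qed
  have rho0: "0 \<le> rho"
  proof -
    have "0 \<le> Ar m n A xs 0" using Ar_nonneg[OF m2 nn, of 0 xs] n1 xspos by (auto simp: less_imp_le)
    then have "0 \<le> rho * xs 0 ^ (m-1)" using eig n1 by auto
    moreover have "0 < xs 0 ^ (m-1)" using xspos n1 by auto
    ultimately show ?thesis by (simp add: zero_le_mult_iff)
  qed
  show ?thesis using xspos rho0 eig by blast
qed

end

definition TAc :: "nat \<Rightarrow> nat \<Rightarrow> (nat list \<Rightarrow> real) \<Rightarrow> complex vec \<Rightarrow> nat \<Rightarrow> complex" where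
  "TAc m n A y i = (\<Sum>js\<in>tidx (m-1) n. complex_of_real (A (i#js)) * prod_list (map (\<lambda>k. y $ k) js))"

lemma ta_idx: "i < n \<Longrightarrow> tensor_apply m n A y $ i = TAc m n A y i"
  by (simp add: tensor_apply_def TAc_def)

lemma ta_dim: "dim_vec (tensor_apply m n A y) = n"
  by (simp add: tensor_apply_def)

lemma rhs_idx: "i < dim_vec y \<Longrightarrow> (lam \<cdot>\<^sub>v vpow k y) $ i = lam * (y $ i) ^ k"
  by (simp add: vpow_def)

lemma rhs_dim: "dim_vec (lam \<cdot>\<^sub>v vpow k y) = dim_vec y"
  by (simp add: vpow_def)

lemma eig_iff: "is_eigenpair m n A lam y \<longleftrightarrow>
   y \<in> carrier_vec n \<and> y \<noteq> 0\<^sub>v n \<and> (\<forall>i<n. TAc m n A y i = lam * (y $ i) ^ (m-1))"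
proof -
  have "tensor_apply m n A y = lam \<cdot>\<^sub>v vpow (m - 1) y \<longleftrightarrow> (\<forall>i<n. TAc m n A y i = lam * (y $ i) ^ (m-1))"
    if yc: "y \<in> carrier_vec n"
  proof
    assume h: "tensor_apply m n A y = lam \<cdot>\<^sub>v vpow (m - 1) y"
    show "\<forall>i<n. TAc m n A y i = lam * (y $ i) ^ (m-1)"
    proof (intro allI impI)
      fix i assume i: "i < n"
      have "TAc m n A y i = tensor_apply m n A y $ i" using ta_idx[OF i] by simp
      also have "\<dots> = (lam \<cdot>\<^sub>v vpow (m - 1) y) $ i" using h by simp
      also have "\<dots> = lam * (y $ i) ^ (m-1)" using rhs_idx i yc by auto
      finally show "TAc m n A y i = lam * (y $ i) ^ (m-1)" .
    qed
  next
    assume h: "\<forall>i<n. TAc m n A y i = lam * (y $ i) ^ (m-1)"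
    show "tensor_apply m n A y = lam \<cdot>\<^sub>v vpow (m - 1) y"
    proof (rule eq_vecI)
      show "dim_vec (tensor_apply m n A y) = dim_vec (lam \<cdot>\<^sub>v vpow (m - 1) y)"
        using yc by (simp add: ta_dim vpow_def)
      fix i assume "i < dim_vec (lam \<cdot>\<^sub>v vpow (m - 1) y)"
      then have i: "i < n" using yc by (simp add: vpow_def)
      then show "tensor_apply m n A y $ i = (lam \<cdot>\<^sub>v vpow (m - 1) y) $ i"
        using h ta_idx rhs_idx yc by auto
    qed
  qed
  then show ?thesis unfolding is_eigenpair_def by blast
qed

lemma norm_pl: "cmod (prod_list (map f js)) = prod_list (map (\<lambda>k. cmod (f k)) js)"
  by (induction js) (auto simp: norm_mult)

lemma pl_mult: "prod_list (map (\<lambda>k. f k * g k) js) = prod_list (map f js) * (prod_list (map g js) :: complex)"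
  by (induction js) (auto simp: algebra_simps)

lemma of_real_pl: "complex_of_real (prod_list (map f js)) = prod_list (map (\<lambda>k. complex_of_real (f k)) js)"
  by (induction js) auto

lemma pl_const_c: "prod_list (map (\<lambda>k. c * f k) js) = c ^ length js * (prod_list (map f js) :: complex)"
  by (induction js) (auto simp: algebra_simps)

lemma unit_re1: "cmod z = 1 \<Longrightarrow> Re z = 1 \<Longrightarrow> z = 1"
  by (metis abs_Re_le_cmod cmod_eq_Re complex_Re_le_cmod complex_eq_iff one_complex.sel(1) one_complex.sel(2) abs_Im_le_cmod
      cmod_power2 power_one add_cancel_right_right power_zero_numeral zero_eq_power2)

context
  fixes m n :: nat and A :: "nat list \<Rightarrow> real"
  assumes m2: "m \<ge> 2" and nn: "tensor_nonneg m n A"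
begin

lemma norm_TAc: "y \<in> carrier_vec n \<Longrightarrow> i < n \<Longrightarrow> cmod (TAc m n A y i) \<le> Ar m n A (\<lambda>k. cmod (y $ k)) i"
  unfolding TAc_def Ar_def
proof (rule order_trans[OF norm_sum], rule sum_mono)
  fix js assume "i < n" "js \<in> tidx (m-1) n"
  then show "cmod (complex_of_real (A (i # js)) * prod_list (map (\<lambda>k. y $ k) js))
         \<le> A (i # js) * prod_list (map (\<lambda>k. cmod (y $ k)) js)"
    using entry_nonneg[OF m2 nn] by (simp add: norm_mult norm_pl)
qed

lemma key:
  assumes wi: "weakly_irreducible m n A" and v: "\<forall>i<n. 0 < v i"
    and ev: "\<forall>i<n. Ar m n A v i = r * v i ^ (m-1)" and r0: "0 \<le> r"
    and eig: "is_eigenpair m n A lam y"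
  shows "cmod lam \<le> r" and "r \<le> cmod lam \<Longrightarrow> \<exists>t>0. \<forall>i<n. cmod (y $ i) = t * v i"
proof -
  define a where "a k = cmod (y $ k)" for k
  have yc: "y \<in> carrier_vec n" and yn: "y \<noteq> 0\<^sub>v n" and ye: "\<forall>i<n. TAc m n A y i = lam * (y $ i) ^ (m-1)"
    using eig unfolding eig_iff by auto
  obtain i1 where i1: "i1 < n" "y $ i1 \<noteq> 0"
  proof (rule ccontr)
    assume "\<not> thesis"
    then have "\<forall>i<n. y $ i = 0" using that by blast
    then have "y = 0\<^sub>v n" using yc by (intro eq_vecI) auto
    then show False using yn by simp
  qed
  have a0: "\<forall>k. 0 \<le> a k" unfolding a_def by simp
  define t where "t = Max ((\<lambda>i. a i / v i) ` {..<n})"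
  have fin: "finite ((\<lambda>i. a i / v i) ` {..<n})" "(\<lambda>i. a i / v i) ` {..<n} \<noteq> {}" using i1 by auto
  have ale: "a i \<le> t * v i" if "i < n" for i
  proof -
    have "a i / v i \<le> t" unfolding t_def using fin that by (intro Max_ge) auto
    then show ?thesis using v that by (simp add: pos_divide_le_eq)
  qed
  have t0: "0 < t"
  proof -
    have "0 < a i1 / v i1" using i1 v unfolding a_def by auto
    also have "\<dots> \<le> t" unfolding t_def using fin i1 by (intro Max_ge) auto
    finally show ?thesis .
  qed
  obtain i0 where i0: "i0 < n" "a i0 / v i0 = t" using Max_in[OF fin] unfolding t_def by auto
  have ai0: "a i0 = t * v i0" using i0 v by (metis nonzero_mult_div_cancel_left less_irrefl divide_eq_eq)
  have tvpos: "\<forall>k<n. 0 < t * v k" using t0 v by auto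
  have scale: "Ar m n A (\<lambda>k. t * v k) i = r * (t * v i) ^ (m-1)" if "i < n" for i
    using Ar_scale[OF m2 nn, of t v i] ev that by (simp add: power_mult_distrib)
  have chain: "cmod lam * a i ^ (m-1) \<le> Ar m n A a i \<and> Ar m n A a i \<le> r * a i ^ (m-1)"
    if "i < n" "a i = t * v i" for i
  proof
    have "cmod lam * a i ^ (m-1) = cmod (TAc m n A y i)" using ye that unfolding a_def by (simp add: norm_mult norm_power)
    also have "\<dots> \<le> Ar m n A a i" using norm_TAc[OF yc that(1)] unfolding a_def by simp
    finally show "cmod lam * a i ^ (m-1) \<le> Ar m n A a i" .
    have "Ar m n A a i \<le> Ar m n A (\<lambda>k. t * v k) i" using ale a0 that by (intro Ar_mono[OF m2 nn]) auto
    also have "\<dots> = r * a i ^ (m-1)" using scale that by simp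
    finally show "Ar m n A a i \<le> r * a i ^ (m-1)" .
  qed
  have api0: "0 < a i0 ^ (m-1)" using ai0 tvpos i0 by simp
  show "cmod lam \<le> r"
    using chain[OF i0(1) ai0] api0 by (meson mult_right_le_imp_le order_trans)
  assume rl: "r \<le> cmod lam"
  define M where "M = {i. i < n \<and> a i = t * v i}"
  have closed: "j \<in> M" if "i \<in> M" "(i, j) \<in> tensor_arcs m n A" for i j
  proof -
    have i: "i < n" "a i = t * v i" using that unfolding M_def by auto
    have "r * a i ^ (m-1) \<le> cmod lam * a i ^ (m-1)" using rl a0 by (intro mult_right_mono) auto
    then have eqA: "Ar m n A a i = Ar m n A (\<lambda>k. t * v k) i"
      using chain[OF i] scale[OF i(1)] i(2) by simp
    from that(2) obtain js where js: "js \<in> tidx (m-1) n" "A (i#js) \<noteq> 0" "j \<in> set js" "j < n"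
      unfolding tensor_arcs_def by auto
    define f where "f ks = A (i#ks) * prod_list (map (\<lambda>k. t * v k) ks) - A (i#ks) * prod_list (map a ks)" for ks
    have fnn: "\<forall>ks\<in>tidx (m-1) n. 0 \<le> f ks"
    proof
      fix ks assume ks: "ks \<in> tidx (m-1) n"
      have "A (i#ks) * prod_list (map a ks) \<le> A (i#ks) * prod_list (map (\<lambda>k. t * v k) ks)"
        using ks i ale a0 by (intro mult_left_mono entry_nonneg[OF m2 nn] pl_mono) (auto dest: tidx_set)
      then show "0 \<le> f ks" unfolding f_def by simp
    qed
    have fs: "sum f (tidx (m-1) n) = 0"
      using eqA unfolding Ar_def f_def sum_subtractf by simp
    have termwise: "\<forall>ks\<in>tidx (m-1) n. f ks = 0"
      using sum_nonneg_eq_0_iff[of "tidx (m-1) n" f] fnn fs by simp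
    then have "A (i#js) * prod_list (map a js) = A (i#js) * prod_list (map (\<lambda>k. t * v k) js)"
      using js termwise unfolding f_def by auto
    then have "prod_list (map a js) = prod_list (map (\<lambda>k. t * v k) js)" using js by simp
    then have "a j = t * v j"
      using js ale a0 tvpos by (intro pl_eq[of js a "\<lambda>k. t * v k"]) (auto dest: tidx_set)
    then show "j \<in> M" unfolding M_def using js by auto
  qed
  have "j \<in> M" if j: "j < n" for j
  proof -
    have "(i0, j) \<in> (tensor_arcs m n A)\<^sup>*" using wi i0 j unfolding weakly_irreducible_def by auto
    then show ?thesis
    proof (induction rule: rtrancl_induct)
      case base then show ?case unfolding M_def using i0 ai0 by auto
    next
      case (step y z) then show ?case using closed by blast
    qed
  qed
  then show "\<exists>t>0. \<forall>i<n. cmod (y $ i) = t * v i" using t0 unfolding M_def a_def by auto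
qed

end

lemma unit_mult_cnj: "cmod W = 1 \<Longrightarrow> W * cnj W = 1"
  using complex_norm_square[of W] by simp

context
  fixes m n :: nat and A :: "nat list \<Rightarrow> real"
  assumes m2: "m \<ge> 2" and nn: "tensor_nonneg m n A"
begin

lemma phase:
  assumes v: "\<forall>i<n. 0 < v i" and ev: "\<forall>i<n. Ar m n A v i = r * v i ^ (m-1)"
    and eig: "is_eigenpair m n A (complex_of_real r * \<omega>) y" and w1: "cmod \<omega> = 1"
    and ya: "\<forall>i<n. cmod (y $ i) = t * v i" and t0: "0 < t"
    and isx: "i#js \<in> tidx m n" and Anz: "A (i#js) \<noteq> 0"
  shows "prod_list (map (\<lambda>k. y $ k / complex_of_real (cmod (y $ k))) js)
           = \<omega> * (y $ i / complex_of_real (cmod (y $ i))) ^ (m-1)"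
proof -
  define u where "u k = y $ k / complex_of_real (cmod (y $ k))" for k
  have i: "i < n" and js: "js \<in> tidx (m-1) n" using isx tidx_Cons[of m i js n] m2 by auto
  have ye: "TAc m n A y i = complex_of_real r * \<omega> * (y $ i) ^ (m-1)"
    using eig i unfolding eig_iff by auto
  have yk: "y $ k = complex_of_real (t * v k) * u k" if "k < n" for k
  proof -
    have "cmod (y $ k) \<noteq> 0" using ya v t0 that by auto
    then show ?thesis unfolding u_def using ya that by simp
  qed
  have uu: "cmod (u k) = 1" if "k < n" for k
  proof -
    have "cmod (y $ k) \<noteq> 0" using ya v t0 that by auto
    then show ?thesis unfolding u_def by (simp add: norm_divide)
  qed
  define c where "c ks = A (i#ks) * prod_list (map v ks)" for ks
  define P where "P ks = prod_list (map u ks)" for ks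
  have prody: "prod_list (map (\<lambda>k. y $ k) ks) = complex_of_real (t ^ (m-1)) * (complex_of_real (prod_list (map v ks)) * P ks)"
    if ks: "ks \<in> tidx (m-1) n" for ks
  proof -
    have "prod_list (map (\<lambda>k. y $ k) ks) = prod_list (map (\<lambda>k. complex_of_real t * (complex_of_real (v k) * u k)) ks)"
      using ks yk by (intro pl_cong) (auto dest: tidx_set)
    also have "\<dots> = complex_of_real t ^ (m-1) * (prod_list (map (\<lambda>k. complex_of_real (v k)) ks) * P ks)"
      unfolding pl_const_c pl_mult P_def using tidx_length[OF ks] by simp
    finally show ?thesis by (simp add: of_real_pl)
  qed
  have S1: "TAc m n A y i = complex_of_real (t ^ (m-1)) * (\<Sum>ks\<in>tidx (m-1) n. complex_of_real (c ks) * P ks)"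
    unfolding TAc_def sum_distrib_left c_def
    by (intro sum.cong refl) (simp add: prody)
  have S2: "TAc m n A y i = complex_of_real (t ^ (m-1)) * (complex_of_real (r * v i ^ (m-1)) * (\<omega> * u i ^ (m-1)))"
    using ye yk[OF i] by (simp add: power_mult_distrib)
  have tne: "complex_of_real (t ^ (m-1)) \<noteq> 0" using t0 by simp
  define W where "W = \<omega> * u i ^ (m-1)"
  have W1: "cmod W = 1" unfolding W_def using w1 uu[OF i] by (simp add: norm_mult norm_power)
  have e: "complex_of_real (t ^ (m-1)) * (\<Sum>ks\<in>tidx (m-1) n. complex_of_real (c ks) * P ks)
      = complex_of_real (t ^ (m-1)) * (complex_of_real (r * v i ^ (m-1)) * W)"
    unfolding W_def by (simp only: S1[symmetric] S2)
  have S3: "(\<Sum>ks\<in>tidx (m-1) n. complex_of_real (c ks) * P ks) = complex_of_real (r * v i ^ (m-1)) * W"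
    using e by (simp only: mult_left_cancel[OF tne])
  have S4: "(\<Sum>ks\<in>tidx (m-1) n. complex_of_real (c ks) * (cnj W * P ks)) = complex_of_real (\<Sum>ks\<in>tidx (m-1) n. c ks)"
  proof -
    have "(\<Sum>ks\<in>tidx (m-1) n. complex_of_real (c ks) * (cnj W * P ks)) = cnj W * (\<Sum>ks\<in>tidx (m-1) n. complex_of_real (c ks) * P ks)"
      unfolding sum_distrib_left by (intro sum.cong refl) (simp add: algebra_simps)
    also have "\<dots> = complex_of_real (r * v i ^ (m-1)) * (W * cnj W)" unfolding S3 by (simp add: algebra_simps)
    also have "\<dots> = complex_of_real (Ar m n A v i)" using unit_mult_cnj[OF W1] ev i by simp
    finally show ?thesis unfolding Ar_def c_def .
  qed
  have cnn: "0 \<le> c ks" if "ks \<in> tidx (m-1) n" for ks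
    unfolding c_def using that i v by (intro mult_nonneg_nonneg entry_nonneg[OF m2 nn] pl_nonneg) (auto dest: tidx_set intro: less_imp_le)
  have Pn: "cmod (cnj W * P ks) = 1" if "ks \<in> tidx (m-1) n" for ks
  proof -
    have "\<forall>k\<in>set ks. cmod (u k) = 1" using that uu by (auto dest: tidx_set)
    then have "prod_list (map (\<lambda>k. cmod (u k)) ks) = 1" by (induction ks) auto
    then have "cmod (P ks) = 1" unfolding P_def norm_pl .
    then show ?thesis using W1 by (simp add: norm_mult)
  qed
  define f where "f ks = c ks * (1 - Re (cnj W * P ks))" for ks
  have fnn: "\<forall>ks\<in>tidx (m-1) n. 0 \<le> f ks"
  proof
    fix ks assume ks: "ks \<in> tidx (m-1) n"
    have "Re (cnj W * P ks) \<le> 1" using complex_Re_le_cmod[of "cnj W * P ks"] Pn[OF ks] by simp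
    then show "0 \<le> f ks" unfolding f_def using cnn[OF ks] by simp
  qed
  have fs: "sum f (tidx (m-1) n) = 0"
  proof -
    have "Re (\<Sum>ks\<in>tidx (m-1) n. complex_of_real (c ks) * (cnj W * P ks)) = (\<Sum>ks\<in>tidx (m-1) n. c ks)"
      using S4 by simp
    then have "(\<Sum>ks\<in>tidx (m-1) n. c ks * Re (cnj W * P ks)) = (\<Sum>ks\<in>tidx (m-1) n. c ks)"
      by simp
    then show ?thesis unfolding f_def by (simp add: algebra_simps sum_subtractf)
  qed
  have "f js = 0" using sum_nonneg_eq_0_iff[of "tidx (m-1) n" f] fnn fs js by simp
  moreover have "0 < c js"
  proof -
    have "0 < A (i#js)" using entry_nonneg[OF m2 nn i js] Anz by simp
    moreover have "0 < prod_list (map v js)" using v js by (intro pl_pos) (auto dest: tidx_set)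
    ultimately show ?thesis unfolding c_def by simp
  qed
  ultimately have "Re (cnj W * P js) = 1" unfolding f_def by simp
  then have "cnj W * P js = 1" using unit_re1 Pn[OF js] by blast
  then have "W * (cnj W * P js) = W" by simp
  then have "P js = W" using unit_mult_cnj[OF W1] by (simp add: mult.assoc[symmetric])
  then show ?thesis unfolding P_def W_def u_def .
qed

lemma phase_conv:
  assumes n1: "n \<ge> 1" and v: "\<forall>i<n. 0 < v i" and ev: "\<forall>i<n. Ar m n A v i = r * v i ^ (m-1)"
    and u0: "u 0 \<noteq> 0"
    and phc: "\<forall>is\<in>tidx m n. A is \<noteq> 0 \<longrightarrow> prod_list (map u (tl is)) = \<omega> * u (hd is) ^ (m-1)"
  shows "is_eigenpair m n A (complex_of_real r * \<omega>) (vec n (\<lambda>i. complex_of_real (v i) * u i))"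
  unfolding eig_iff
proof (intro conjI allI impI)
  define y where "y = vec n (\<lambda>i. complex_of_real (v i) * u i)"
  show "vec n (\<lambda>i. complex_of_real (v i) * u i) \<in> carrier_vec n" by simp
  have "0 < v 0" using n1 v by simp
  then have "vec n (\<lambda>i. complex_of_real (v i) * u i) $ 0 \<noteq> 0" using n1 u0 by simp
  moreover have "0\<^sub>v n $ 0 = (0::complex)" using n1 by simp
  ultimately show "vec n (\<lambda>i. complex_of_real (v i) * u i) \<noteq> 0\<^sub>v n" by metis
  fix i assume i: "i < n"
  have trm: "complex_of_real (A (i#js)) * prod_list (map (\<lambda>k. vec n (\<lambda>i. complex_of_real (v i) * u i) $ k) js)
     = complex_of_real (A (i#js) * prod_list (map v js)) * (\<omega> * u i ^ (m-1))"
    if js: "js \<in> tidx (m-1) n" for js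
  proof -
    have "prod_list (map (\<lambda>k. vec n (\<lambda>i. complex_of_real (v i) * u i) $ k) js)
        = prod_list (map (\<lambda>k. complex_of_real (v k) * u k) js)"
      using js by (intro pl_cong) (auto dest: tidx_set)
    also have "\<dots> = complex_of_real (prod_list (map v js)) * prod_list (map u js)"
      by (simp add: pl_mult of_real_pl)
    finally have e: "prod_list (map (\<lambda>k. vec n (\<lambda>i. complex_of_real (v i) * u i) $ k) js)
        = complex_of_real (prod_list (map v js)) * prod_list (map u js)" .
    show ?thesis
    proof (cases "A (i#js) = 0")
      case True then show ?thesis by simp
    next
      case False
      have "i#js \<in> tidx m n" using i js tidx_Cons[of m i js n] m2 by auto
      then have "prod_list (map u js) = \<omega> * u i ^ (m-1)" using phc False by force
      then show ?thesis using e by simp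
    qed
  qed
  have "TAc m n A (vec n (\<lambda>i. complex_of_real (v i) * u i)) i
      = (\<Sum>js\<in>tidx (m-1) n. complex_of_real (A (i#js) * prod_list (map v js)) * (\<omega> * u i ^ (m-1)))"
    unfolding TAc_def by (intro sum.cong refl trm) 
  also have "\<dots> = complex_of_real (Ar m n A v i) * (\<omega> * u i ^ (m-1))"
    unfolding Ar_def of_real_sum sum_distrib_right ..
  also have "\<dots> = complex_of_real r * \<omega> * (vec n (\<lambda>i. complex_of_real (v i) * u i) $ i) ^ (m-1)"
    using ev i by (simp add: power_mult_distrib)
  finally show "TAc m n A (vec n (\<lambda>i. complex_of_real (v i) * u i)) i
      = complex_of_real r * \<omega> * (vec n (\<lambda>i. complex_of_real (v i) * u i) $ i) ^ (m-1)" .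
qed

end

definition phc :: "nat \<Rightarrow> nat \<Rightarrow> (nat list \<Rightarrow> real) \<Rightarrow> complex \<Rightarrow> (nat \<Rightarrow> complex) \<Rightarrow> bool" where
  "phc m n A w u \<longleftrightarrow> (\<forall>is\<in>tidx m n. A is \<noteq> 0 \<longrightarrow> prod_list (map u (tl is)) = w * u (hd is) ^ (m-1))"

definition Uset :: "nat \<Rightarrow> nat \<Rightarrow> (nat list \<Rightarrow> real) \<Rightarrow> complex \<Rightarrow> (nat \<Rightarrow> complex) set" where
  "Uset m n A w = {u. (\<forall>i<n. cmod (u i) = 1) \<and> u 0 = 1 \<and> phc m n A w u}"

definition emb :: "nat \<Rightarrow> (nat \<Rightarrow> real) \<Rightarrow> (nat \<Rightarrow> complex) \<Rightarrow> complex vec" where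
  "emb n v u = vec n (\<lambda>i. complex_of_real (v i) * u i)"

definition diagm :: "nat \<Rightarrow> (nat \<Rightarrow> complex) \<Rightarrow> complex mat" where
  "diagm n u = mat n n (\<lambda>(i,k). if i = k then u i else 0)"

definition om :: "nat \<Rightarrow> nat \<Rightarrow> complex" where
  "om l j = cis (2 * pi * real j / real l)"

lemma om_add: "om l j * om l k = om l (j + k)"
  unfolding om_def cis_mult by (simp add: add_divide_distrib distrib_left)

lemma cis_period: "cis (x + 2 * pi * real q) = cis x"
proof -
  have "cis (2 * pi * real q) = 1" by (rule cis_multiple_2pi) simp
  then show ?thesis by (simp add: cis_mult[symmetric])
qed

lemma om_mod: assumes "l \<ge> 1" shows "om l j = om l (j mod l)"
proof -
  have j: "real j = real (j mod l) + real l * real (j div l)"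
    by (metis of_nat_add of_nat_mult mod_mult_div_eq add.commute mult.commute)
  have "2 * pi * real j / real l = 2 * pi * real (j mod l) / real l + 2 * pi * real (j div l)"
    using assms unfolding j by (simp add: field_simps)
  then show ?thesis unfolding om_def using cis_period by simp
qed

lemma om_cnj: assumes "j < l" shows "cnj (om l j) = om l (l - j)"
proof -
  have "2 * pi * real (l - j) / real l = - (2 * pi * real j / real l) + 2 * pi * real 1"
    using assms by (simp add: of_nat_diff field_simps)
  then have "om l (l - j) = cis (- (2 * pi * real j / real l) + 2 * pi * real 1)" unfolding om_def by simp
  also have "\<dots> = cis (- (2 * pi * real j / real l))" by (rule cis_period)
  finally show ?thesis unfolding om_def cis_cnj by simp
qed

lemma om_norm[simp]: "cmod (om l j) = 1"
  unfolding om_def by simp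

lemma om0[simp]: "om l 0 = 1"
  unfolding om_def by simp

lemma diagm_carrier[simp]: "diagm n u \<in> carrier_mat n n"
  unfolding diagm_def by simp

lemma diagm_idx: "i < n \<Longrightarrow> k < n \<Longrightarrow> diagm n u $$ (i,k) = (if i = k then u i else 0)"
  unfolding diagm_def by simp

lemma diag_mult: "diagm n a * diagm n b = diagm n (\<lambda>i. a i * b i)"
proof (rule eq_matI)
  fix i k assume i: "i < dim_row (diagm n (\<lambda>i. a i * b i))" and k: "k < dim_col (diagm n (\<lambda>i. a i * b i))"
  then have i: "i < n" and k: "k < n" by (auto simp: diagm_def)
  have "(diagm n a * diagm n b) $$ (i,k) = (\<Sum>t\<in>{0..<n}. diagm n a $$ (i,t) * diagm n b $$ (t,k))"
    using i k by (simp add: scalar_prod_def diagm_def)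
  also have "\<dots> = (\<Sum>t\<in>{0..<n}. (if i = t then a i else 0) * (if t = k then b t else 0))"
    by (intro sum.cong refl) (auto simp: diagm_idx i k)
  also have "\<dots> = (\<Sum>t\<in>{0..<n}. if i = t then (if t = k then a i * b t else 0) else 0)"
    by (intro sum.cong refl) auto
  also have "\<dots> = (if i = k then a i * b i else 0)"
    using i k by (simp add: sum.delta)
  finally show "(diagm n a * diagm n b) $$ (i,k) = diagm n (\<lambda>i. a i * b i) $$ (i,k)"
    using i k by (simp add: diagm_idx)
qed (auto simp: diagm_def)

lemma diag_mult_vec: "diagm n a *\<^sub>v vec n f = vec n (\<lambda>i. a i * f i)"
proof (rule eq_vecI)
  fix i assume "i < dim_vec (vec n (\<lambda>i. a i * f i))"
  then have i: "i < n" by simp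
  have "(diagm n a *\<^sub>v vec n f) $ i = (\<Sum>t\<in>{0..<n}. diagm n a $$ (i,t) * f t)"
    using i by (simp add: scalar_prod_def diagm_def)
  also have "\<dots> = (\<Sum>t\<in>{0..<n}. (if i = t then a i else 0) * f t)"
    by (intro sum.cong refl) (auto simp: diagm_idx i)
  also have "\<dots> = (\<Sum>t\<in>{0..<n}. if i = t then a i * f t else 0)"
    by (intro sum.cong refl) auto
  also have "\<dots> = a i * f i"
    using i by (simp add: sum.delta)
  finally show "(diagm n a *\<^sub>v vec n f) $ i = vec n (\<lambda>i. a i * f i) $ i" using i by simp
qed (auto simp: diagm_def)

lemma diagm_one: "diagm n (\<lambda>_. 1) = 1\<^sub>m n"
  by (rule eq_matI) (auto simp: diagm_def)

lemma diagm_cong: "(\<forall>i<n. a i = b i) \<Longrightarrow> diagm n a = diagm n b"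
  by (rule eq_matI) (auto simp: diagm_def)

lemma emb_cong: "(\<forall>i<n. a i = b i) \<Longrightarrow> emb n v a = emb n v b"
  by (rule eq_vecI) (auto simp: emb_def)

lemma pl_cnj: "prod_list (map (\<lambda>k. cnj (u k)) js) = cnj (prod_list (map u js))"
  by (induction js) auto

lemma phc_mult: "phc m n A w u \<Longrightarrow> phc m n A w' u' \<Longrightarrow> phc m n A (w * w') (\<lambda>i. u i * u' i)"
  unfolding phc_def by (auto simp: pl_mult power_mult_distrib algebra_simps)

lemma phc_cnj: "phc m n A w u \<Longrightarrow> phc m n A (cnj w) (\<lambda>i. cnj (u i))"
  unfolding phc_def by (auto simp: pl_cnj)

lemma Uset_mult: "u \<in> Uset m n A w \<Longrightarrow> u' \<in> Uset m n A w' \<Longrightarrow> (\<lambda>i. u i * u' i) \<in> Uset m n A (w * w')"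
  unfolding Uset_def by (auto simp: phc_mult norm_mult)

lemma Uset_cnj: "u \<in> Uset m n A w \<Longrightarrow> (\<lambda>i. cnj (u i)) \<in> Uset m n A (cnj w)"
  unfolding Uset_def by (auto simp: phc_cnj)

lemma pl_one: "prod_list (map (\<lambda>_. (1::complex)) xs) = 1"
  by (induction xs) auto

lemma Uset_one: "(\<lambda>_. 1) \<in> Uset m n A 1"
  unfolding Uset_def phc_def by (auto simp: pl_one)

lemma Dy_emb:
  assumes "\<forall>i<n. 0 < v i" "\<forall>i<n. cmod (u i) = 1"
  shows "Dy n (emb n v u) = diagm n u"
proof (rule eq_matI)
  fix i k assume "i < dim_row (diagm n u)" "k < dim_col (diagm n u)"
  then have i: "i < n" and k: "k < n" by (auto simp: diagm_def)
  have "0 < v i" using assms i by auto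
  then have "cmod (complex_of_real (v i) * u i) = v i" using assms(2) i by (simp add: norm_mult)
  moreover have "complex_of_real (v i) \<noteq> 0" using \<open>0 < v i\<close> by simp
  ultimately have e: "complex_of_real (v i) * u i / complex_of_real (cmod (complex_of_real (v i) * u i)) = u i"
    by simp
  show "Dy n (emb n v u) $$ (i, k) = diagm n u $$ (i, k)"
  proof (cases "i = k")
    case True then show ?thesis using e i by (simp add: Dy_def emb_def diagm_def)
  next
    case False then show ?thesis using i k by (simp add: Dy_def emb_def diagm_def)
  qed
qed (auto simp: Dy_def diagm_def)


lemma real_unit_pos: "z \<in> \<real> \<Longrightarrow> 0 < Re z \<Longrightarrow> cmod z = 1 \<Longrightarrow> z = 1"
  by (metis Reals_cases Re_complex_of_real abs_of_pos norm_of_real of_real_1)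

lemma pl_mult_r: "prod_list (map (\<lambda>k. f k * g k) js) = prod_list (map f js) * (prod_list (map g js) :: real)"
  by (induction js) (auto simp: algebra_simps)

lemma diag_nonzero:
  assumes D: "D \<in> carrier_mat n n" "diagonal_mat D" "invertible_mat (D :: complex mat)" and k: "k < n"
  shows "D $$ (k,k) \<noteq> 0"
proof -
  obtain B where B: "D * B = 1\<^sub>m n" "B * D = 1\<^sub>m (dim_row B)"
    using D unfolding invertible_mat_def inverts_mat_def by auto
  have "dim_col B = n" using arg_cong[OF B(1), of dim_col] by simp
  moreover have "dim_row B = n" using arg_cong[OF B(2), of dim_col] D(1) by simp
  ultimately have Bc: "B \<in> carrier_mat n n" by auto
  have "det D * det B = 1" using det_mult[OF D(1) Bc] B(1) by simp
  then have dD: "det D \<noteq> 0" by auto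
  have ut: "upper_triangular D" using D unfolding upper_triangular_def diagonal_mat_def by auto
  have "det D = prod_list (diag_mat D)" by (rule det_upper_triangular[OF ut D(1)])
  then have "0 \<notin> set (diag_mat D)" using dD by (simp add: prod_list_zero_iff)
  then show ?thesis using k D(1) unfolding diag_mat_def by auto
qed

lemma TAc_scale: "TAc m n A (c \<cdot>\<^sub>v y) i = c ^ (m-1) * TAc m n A y i" if "y \<in> carrier_vec n"
proof -
  have "prod_list (map (\<lambda>k. (c \<cdot>\<^sub>v y) $ k) js) = c ^ (m-1) * prod_list (map (\<lambda>k. y $ k) js)"
    if js: "js \<in> tidx (m-1) n" for js
  proof -
    have "prod_list (map (\<lambda>k. (c \<cdot>\<^sub>v y) $ k) js) = prod_list (map (\<lambda>k. c * y $ k) js)"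
      using js \<open>y \<in> carrier_vec n\<close> by (intro pl_cong) (auto dest: tidx_set)
    then show ?thesis using tidx_length[OF js] by (simp add: pl_const_c)
  qed
  then show ?thesis unfolding TAc_def sum_distrib_left by (intro sum.cong refl) (simp add: algebra_simps)
qed

lemma eig_scale:
  assumes "is_eigenpair m n A lam y" "c \<noteq> 0"
  shows "is_eigenpair m n A lam (c \<cdot>\<^sub>v y)"
  unfolding eig_iff
proof (intro conjI allI impI)
  have y: "y \<in> carrier_vec n" "y \<noteq> 0\<^sub>v n" "\<forall>i<n. TAc m n A y i = lam * (y $ i) ^ (m-1)"
    using assms unfolding eig_iff by auto
  show "c \<cdot>\<^sub>v y \<in> carrier_vec n" using y by simp
  show "c \<cdot>\<^sub>v y \<noteq> 0\<^sub>v n"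
  proof
    assume h: "c \<cdot>\<^sub>v y = 0\<^sub>v n"
    have "y $ i = 0" if i: "i < n" for i
    proof -
      have "(c \<cdot>\<^sub>v y) $ i = 0\<^sub>v n $ i" using h by simp
      then have "c * y $ i = 0" using y(1) i by simp
      then show ?thesis using assms(2) by simp
    qed
    then have "y = 0\<^sub>v n" using y(1) by (intro eq_vecI) auto
    then show False using y by simp
  qed
  fix i assume i: "i < n"
  show "TAc m n A (c \<cdot>\<^sub>v y) i = lam * ((c \<cdot>\<^sub>v y) $ i) ^ (m-1)"
    using TAc_scale[OF y(1)] y i by (simp add: power_mult_distrib)
qed

context
  fixes m n l :: nat and A :: "nat list \<Rightarrow> real" and v :: "nat \<Rightarrow> real" and r :: real
  assumes m2: "m \<ge> 2" and n1: "n \<ge> 1" and l1: "l \<ge> 1" and nn: "tensor_nonneg m n A"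
    and wi: "weakly_irreducible m n A" and ss: "spectral_sym m n A l"
    and vpos: "\<forall>i<n. 0 < v i" and v0: "v 0 = 1" and r0: "0 \<le> r"
    and ev: "\<forall>i<n. Ar m n A v i = r * v i ^ (m-1)"
begin

lemma unit_U: "u \<in> Uset m n A w \<Longrightarrow> \<forall>i<n. cmod (u i) = 1"
  unfolding Uset_def by auto

lemma emb_eig: "u \<in> Uset m n A w \<Longrightarrow> is_eigenpair m n A (complex_of_real r * w) (emb n v u)"
  unfolding emb_def using phase_conv[OF m2 nn n1 vpos ev, of u w] by (auto simp: Uset_def phc_def)

lemma emb0: "u \<in> Uset m n A w \<Longrightarrow> emb n v u $ 0 = 1"
  unfolding emb_def Uset_def using n1 v0 by auto

lemma r_eig: "complex_of_real r \<in> eigenvalues m n A"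
  using emb_eig[OF Uset_one] unfolding eigenvalues_def by auto

lemma spec: "spec_radius m n A = r"
  unfolding spec_radius_def
proof (rule cSup_eq_maximum)
  show "r \<in> cmod ` eigenvalues m n A" using r_eig r0 by (metis image_eqI norm_of_real abs_of_nonneg)
  fix x assume "x \<in> cmod ` eigenvalues m n A"
  then obtain lam y where "x = cmod lam" "is_eigenpair m n A lam y" unfolding eigenvalues_def by auto
  then show "x \<le> r" using key(1)[OF m2 nn wi vpos ev r0] by auto
qed

lemma lamj: "lam_j m n A l j = complex_of_real r * om l j"
  unfolding lam_j_def spec om_def by simp

lemma eigset:
  assumes w1: "cmod w = 1"
  shows "{y. is_eigenpair m n A (complex_of_real r * w) y \<and> y $ 0 = 1} = emb n v ` Uset m n A w"
proof
  show "emb n v ` Uset m n A w \<subseteq> {y. is_eigenpair m n A (complex_of_real r * w) y \<and> y $ 0 = 1}"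
    using emb_eig emb0 by auto
  show "{y. is_eigenpair m n A (complex_of_real r * w) y \<and> y $ 0 = 1} \<subseteq> emb n v ` Uset m n A w"
  proof
    fix y assume "y \<in> {y. is_eigenpair m n A (complex_of_real r * w) y \<and> y $ 0 = 1}"
    then have eig: "is_eigenpair m n A (complex_of_real r * w) y" and y0: "y $ 0 = 1" by auto
    have yc: "y \<in> carrier_vec n" using eig unfolding eig_iff by auto
    have "r \<le> cmod (complex_of_real r * w)" using w1 r0 by (simp add: norm_mult)
    then obtain t where t: "0 < t" "\<forall>i<n. cmod (y $ i) = t * v i"
      using key(2)[OF m2 nn wi vpos ev r0 eig] by blast
    have "cmod (y $ 0) = t * v 0" using t(2) n1 by simp
    then have t1: "t = 1" using y0 v0 by simp
    have ya: "\<forall>i<n. cmod (y $ i) = v i" using t(2) t1 by simp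
    define u where "u k = y $ k / complex_of_real (cmod (y $ k))" for k
    have ynz: "y $ k \<noteq> 0" if "k < n" for k
    proof -
      have "cmod (y $ k) = v k" "0 < v k" using ya vpos that by auto
      then show ?thesis by auto
    qed
    have uu: "\<forall>i<n. cmod (u i) = 1" unfolding u_def using ynz by (simp add: norm_divide)
    have u0: "u 0 = 1" unfolding u_def using y0 by simp
    have phc: "phc m n A w u" unfolding phc_def
    proof (intro ballI impI)
      fix "is" assume isx: "is \<in> tidx m n" and Anz: "A is \<noteq> 0"
      then obtain i js where ij: "is = i # js" using m2 unfolding tidx_def by (cases "is") auto
      show "prod_list (map u (tl is)) = w * u (hd is) ^ (m-1)"
        using phase[OF m2 nn vpos ev eig w1 t(2) t(1), of i js] isx Anz unfolding ij u_def by simp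
    qed
    have "u \<in> Uset m n A w" unfolding Uset_def using uu u0 phc by auto
    moreover have "y = emb n v u"
    proof (rule eq_vecI)
      show "dim_vec y = dim_vec (emb n v u)" using yc by (simp add: emb_def)
      fix i assume "i < dim_vec (emb n v u)"
      then have i: "i < n" by (simp add: emb_def)
      have "complex_of_real (cmod (y $ i)) \<noteq> 0" using ynz[OF i] by simp
      then show "y $ i = emb n v u $ i" using i ya unfolding emb_def u_def by simp
    qed
    ultimately show "y \<in> emb n v ` Uset m n A w" by blast
  qed
qed

lemma PVj_eq: "PVj m n A l j = emb n v ` Uset m n A (om l j)"
  unfolding PVj_def lamj using eigset[of "om l j"] by simp

lemma vp_eq: "vp m n A l = emb n v (\<lambda>_. 1)"
  unfolding vp_def
proof (rule the_equality)
  have "emb n v (\<lambda>_. 1) \<in> PVj m n A l 0" unfolding PVj_eq using Uset_one by simp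
  moreover have "\<forall>i<n. emb n v (\<lambda>_. 1) $ i \<in> \<real> \<and> 0 < Re (emb n v (\<lambda>_. 1) $ i)"
    using vpos unfolding emb_def by auto
  ultimately show "emb n v (\<lambda>_. 1) \<in> PVj m n A l 0 \<and> (\<forall>i<n. emb n v (\<lambda>_. 1) $ i \<in> \<real> \<and> 0 < Re (emb n v (\<lambda>_. 1) $ i))"
    by blast
  fix y assume y: "y \<in> PVj m n A l 0 \<and> (\<forall>i<n. y $ i \<in> \<real> \<and> 0 < Re (y $ i))"
  then obtain u where u: "u \<in> Uset m n A 1" "y = emb n v u" unfolding PVj_eq by auto
  have "u i = 1" if i: "i < n" for i
  proof -
    have yi: "y $ i = complex_of_real (v i) * u i" using u i by (simp add: emb_def)
    have vi: "0 < v i" using vpos i by auto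
    have "u i = y $ i / complex_of_real (v i)" using yi vi by simp
    moreover have "y $ i \<in> \<real>" "0 < Re (y $ i)" using y i by auto
    ultimately have "u i \<in> \<real>" "0 < Re (u i)" using vi by (auto simp: Reals_divide Re_divide_of_real)
    then show ?thesis using real_unit_pos unit_U[OF u(1)] i by auto
  qed
  then show "y = emb n v (\<lambda>_. 1)" using u emb_cong by auto
qed

lemma circ_emb:
  assumes "\<forall>i<n. cmod (a i) = 1" "\<forall>i<n. cmod (b i) = 1"
  shows "circ m n A l (emb n v a) (emb n v b) = emb n v (\<lambda>i. a i * b i)"
  unfolding circ_def vp_eq Dy_emb[OF vpos assms(1)] Dy_emb[OF vpos assms(2)]
  by (simp add: emb_def diag_mult_vec algebra_simps)

lemma Dset_eq: "Dset m n A l j = diagm n ` Uset m n A (om l j)"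
proof
  have cisom: "cis (- 2 * pi * real j / real l) * om l j = 1"
    unfolding om_def cis_mult by simp
  show "diagm n ` Uset m n A (om l j) \<subseteq> Dset m n A l j"
  proof
    fix D assume "D \<in> diagm n ` Uset m n A (om l j)"
    then obtain u where u: "u \<in> Uset m n A (om l j)" "D = diagm n u" by auto
    have uu: "\<forall>i<n. cmod (u i) = 1" "u 0 = 1" "phc m n A (om l j) u" using u unfolding Uset_def by auto
    have diag: "diagonal_mat D" unfolding u diagonal_mat_def by (simp add: diagm_def)
    have inv: "invertible_mat D"
    proof -
      have e1: "diagm n u * diagm n (\<lambda>i. cnj (u i)) = 1\<^sub>m n"
        unfolding diag_mult diagm_one[symmetric] using uu(1) unit_mult_cnj by (intro diagm_cong) auto
      have e2: "diagm n (\<lambda>i. cnj (u i)) * diagm n u = 1\<^sub>m n"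
        unfolding diag_mult diagm_one[symmetric] using uu(1) unit_mult_cnj by (intro diagm_cong) (auto simp: mult.commute)
      show ?thesis unfolding invertible_mat_def inverts_mat_def square_mat.simps u
        using e1 e2 by (intro conjI exI[of _ "diagm n (\<lambda>i. cnj (u i))"]) (auto simp: diagm_def)
    qed
    have d00: "D $$ (0,0) = 1" unfolding u using n1 uu(2) by (simp add: diagm_def)
    have eqn: "complex_of_real (A is) = cis (- 2 * pi * real j / real l) *
          tensor_PQ (\<lambda>i. inverse ((D $$ (i, i)) ^ (m - 1))) A (\<lambda>i. D $$ (i, i)) is"
      if isx: "is \<in> tidx m n" for "is"
    proof -
      obtain i js where ij: "is = i # js" using m2 isx unfolding tidx_def by (cases "is") auto
      have i: "i < n" and js: "js \<in> tidx (m-1) n" using isx tidx_Cons[of m i js n] m2 unfolding ij by auto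
      have pq: "prod_list (map (\<lambda>i. D $$ (i, i)) js) = prod_list (map u js)"
        using js unfolding u by (intro pl_cong) (auto simp: diagm_def dest: tidx_set)
      have ui: "u i \<noteq> 0" using uu(1) i by fastforce
      show ?thesis
      proof (cases "A is = 0")
        case True then show ?thesis by (simp add: tensor_PQ_def)
      next
        case False
        then have pu: "prod_list (map u js) = om l j * u i ^ (m-1)" using uu(3) isx unfolding phc_def ij by auto
        have "cis (- 2 * pi * real j / real l) * tensor_PQ (\<lambda>i. inverse ((D $$ (i, i)) ^ (m - 1))) A (\<lambda>i. D $$ (i, i)) is
           = complex_of_real (A is) * (cis (- 2 * pi * real j / real l) * om l j) * (inverse (u i ^ (m-1)) * u i ^ (m-1))"
          unfolding tensor_PQ_def ij using pq pu i by (simp add: u diagm_def algebra_simps)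
        also have "\<dots> = complex_of_real (A is)" using cisom ui by simp
        finally show ?thesis by simp
      qed
    qed
    show "D \<in> Dset m n A l j" unfolding Dset_def using diag inv d00 eqn u by auto
  qed
  show "Dset m n A l j \<subseteq> diagm n ` Uset m n A (om l j)"
  proof
    fix D assume "D \<in> Dset m n A l j"
    then have Dc: "D \<in> carrier_mat n n" and diag: "diagonal_mat D" and inv: "invertible_mat D"
      and d00: "D $$ (0,0) = 1"
      and eqn: "\<forall>is \<in> tidx m n. complex_of_real (A is) = cis (- 2 * pi * real j / real l) *
          tensor_PQ (\<lambda>i. inverse ((D $$ (i, i)) ^ (m - 1))) A (\<lambda>i. D $$ (i, i)) is"
      unfolding Dset_def by auto
    define d where "d k = D $$ (k,k)" for k
    have Dd: "D = diagm n d"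
      using Dc diag unfolding diagonal_mat_def d_def by (intro eq_matI) (auto simp: diagm_def)
    have dnz: "d k \<noteq> 0" if "k < n" for k unfolding d_def using diag_nonzero[OF Dc diag inv that] .
    have dphc: "prod_list (map d js) = om l j * d i ^ (m-1)" if isx: "i#js \<in> tidx m n" "A (i#js) \<noteq> 0" for i js
    proof -
      have i: "i < n" using isx tidx_Cons[of m i js n] m2 by auto
      define a where "a = complex_of_real (A (i#js))"
      define c where "c = cis (- 2 * pi * real j / real l)"
      have an: "a \<noteq> 0" using isx unfolding a_def by simp
      have pn: "d i ^ (m-1) \<noteq> 0" using dnz[OF i] by simp
      have e: "a = c * (inverse (d i ^ (m-1)) * a * prod_list (map d js))"
        using eqn isx unfolding a_def c_def tensor_PQ_def d_def by auto
      have "a * (om l j * d i ^ (m-1)) = (c * om l j) * (inverse (d i ^ (m-1)) * d i ^ (m-1)) * a * prod_list (map d js)"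
        by (subst e) (simp add: algebra_simps)
      also have "\<dots> = a * prod_list (map d js)" using cisom pn unfolding c_def by simp
      finally show ?thesis using an by simp
    qed
    define s where "s k = cmod (d k)" for k
    define w where "w k = s k * v k" for k
    have spos: "0 < s k" if "k < n" for k unfolding s_def using dnz[OF that] by simp
    have wpos: "\<forall>k<n. 0 < w k" unfolding w_def using spos vpos by auto
    have sphc: "prod_list (map s js) = s i ^ (m-1)" if "i#js \<in> tidx m n" "A (i#js) \<noteq> 0" for i js
    proof -
      have "prod_list (map s js) = cmod (prod_list (map d js))" unfolding s_def norm_pl ..
      also have "\<dots> = s i ^ (m-1)" unfolding dphc[OF that] s_def by (simp add: norm_mult norm_power)
      finally show ?thesis .
    qed
    have evw: "\<forall>i<n. Ar m n A w i = r * w i ^ (m-1)"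
    proof (intro allI impI)
      fix i assume i: "i < n"
      have "Ar m n A w i = (\<Sum>js\<in>tidx (m-1) n. s i ^ (m-1) * (A (i#js) * prod_list (map v js)))"
        unfolding Ar_def
      proof (intro sum.cong refl)
        fix js assume js: "js \<in> tidx (m-1) n"
        show "A (i # js) * prod_list (map w js) = s i ^ (m-1) * (A (i # js) * prod_list (map v js))"
        proof (cases "A (i#js) = 0")
          case True then show ?thesis by simp
        next
          case False
          have "i#js \<in> tidx m n" using i js tidx_Cons[of m i js n] m2 by auto
          then show ?thesis unfolding w_def pl_mult_r using sphc False by simp
        qed
      qed
      also have "\<dots> = s i ^ (m-1) * Ar m n A v i" unfolding Ar_def sum_distrib_left ..
      also have "\<dots> = r * w i ^ (m-1)" using ev i unfolding w_def by (simp add: power_mult_distrib)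
      finally show "Ar m n A w i = r * w i ^ (m-1)" .
    qed
    have eigw: "is_eigenpair m n A (complex_of_real r * 1) (vec n (\<lambda>i. complex_of_real (w i) * 1))"
      by (rule phase_conv[OF m2 nn n1 wpos evw]) (auto simp: pl_one)
    have "r \<le> cmod (complex_of_real r * 1)" using r0 by simp
    then obtain t where t: "0 < t" "\<forall>i<n. cmod (vec n (\<lambda>i. complex_of_real (w i) * 1) $ i) = t * v i"
      using key(2)[OF m2 nn wi vpos ev r0 eigw] by blast
    have wt: "w i = t * v i" if "i < n" for i
    proof -
      have "\<bar>w i\<bar> = t * v i" "0 < w i" using t(2) that wpos by auto
      then show ?thesis by simp
    qed
    have s0: "s 0 = 1" unfolding s_def d_def using d00 by simp
    have t1: "t = 1" using wt[of 0] n1 s0 v0 unfolding w_def by simp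
    have s1: "s i = 1" if "i < n" for i using wt[OF that] t1 vpos that unfolding w_def by auto
    have "d \<in> Uset m n A (om l j)"
      unfolding Uset_def phc_def
    proof (intro CollectI conjI allI impI ballI)
      show "cmod (d i) = 1" if "i < n" for i using s1[OF that] unfolding s_def .
      show "d 0 = 1" unfolding d_def using d00 .
      fix "is" assume isx: "is \<in> tidx m n" and Anz: "A is \<noteq> 0"
      then obtain i js where ij: "is = i # js" using m2 unfolding tidx_def by (cases "is") auto
      show "prod_list (map d (tl is)) = om l j * d (hd is) ^ (m - 1)"
        using dphc isx Anz unfolding ij by auto
    qed
    then show "D \<in> diagm n ` Uset m n A (om l j)" using Dd by auto
  qed
qed

lemma U_nonempty: assumes "j < l" shows "Uset m n A (om l j) \<noteq> {}"
proof -
  have rot: "cis (2 * pi / real l) * z \<in> eigenvalues m n A" if "z \<in> eigenvalues m n A" for z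
    using ss that unfolding spectral_sym_def by blast
  have "complex_of_real r * om l k \<in> eigenvalues m n A" for k
  proof (induction k)
    case 0 then show ?case using r_eig by simp
  next
    case (Suc k)
    have "om l (Suc k) = cis (2 * pi / real l) * om l k"
      using om_add[of l 1 k] unfolding om_def by simp
    then show ?case using rot[OF Suc] by (simp add: algebra_simps)
  qed
  then obtain y where eig: "is_eigenpair m n A (complex_of_real r * om l j) y" unfolding eigenvalues_def by auto
  have "r \<le> cmod (complex_of_real r * om l j)" using r0 by (simp add: norm_mult)
  then obtain t where t: "0 < t" "\<forall>i<n. cmod (y $ i) = t * v i"
    using key(2)[OF m2 nn wi vpos ev r0 eig] by blast
  have "cmod (y $ 0) = t * v 0" "0 < v 0" using t(2) vpos n1 by auto
  then have y0: "y $ 0 \<noteq> 0" using t(1) by auto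
  have yc: "y \<in> carrier_vec n" using eig unfolding eig_iff by auto
  have eig': "is_eigenpair m n A (complex_of_real r * om l j) ((1 / y $ 0) \<cdot>\<^sub>v y)"
    using eig_scale[OF eig] y0 by simp
  have "((1 / y $ 0) \<cdot>\<^sub>v y) $ 0 = 1" using y0 yc n1 by auto
  then have "(1 / y $ 0) \<cdot>\<^sub>v y \<in> emb n v ` Uset m n A (om l j)"
    using eigset[of "om l j"] eig' by auto
  then show ?thesis by auto
qed

end

context
  fixes m n l :: nat and A :: "nat list \<Rightarrow> real" and v :: "nat \<Rightarrow> real" and r :: real
  assumes m2: "m \<ge> 2" and n1: "n \<ge> 1" and l1: "l \<ge> 1" and nn: "tensor_nonneg m n A"
    and wi: "weakly_irreducible m n A" and ss: "spectral_sym m n A l"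
    and vpos: "\<forall>i<n. 0 < v i" and v0: "v 0 = 1" and r0: "0 \<le> r"
    and ev: "\<forall>i<n. Ar m n A v i = r * v i ^ (m-1)"
begin

lemmas PVj_eq' = PVj_eq[OF m2 n1 l1 nn wi ss vpos v0 r0 ev]
lemmas Dset_eq' = Dset_eq[OF m2 n1 l1 nn wi ss vpos v0 r0 ev]
lemmas vp_eq' = vp_eq[OF m2 n1 l1 nn wi ss vpos v0 r0 ev]
lemmas circ_emb' = circ_emb[OF m2 n1 l1 nn wi ss vpos v0 r0 ev]
lemmas U_nonempty' = U_nonempty[OF m2 n1 l1 nn wi ss vpos v0 r0 ev]

lemma main_ctx:
  shows "comm_group (PV_group m n A l)
    \<and> subgroup (PVj m n A l 0) (PV_group m n A l)
    \<and> (\<forall>j \<in> {1..l - 1}. PVj m n A l j \<in> rcosets\<^bsub>PV_group m n A l\<^esub> (PVj m n A l 0))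
    \<and> Dy n \<in> iso (PV_group m n A l) (D_group m n A l)
    \<and> (\<forall>j < l. Dy n ` PVj m n A l j = Dset m n A l j)"
proof -
  define UU where "UU = (\<Union>j<l. Uset m n A (om l j))"
  have l0: "0 < l" using l1 by simp
  have PV_eq: "PV m n A l = emb n v ` UU" unfolding PV_def UU_def PVj_eq' by auto
  have Dall_eq: "Dall m n A l = diagm n ` UU" unfolding Dall_def UU_def Dset_eq' by auto
  have UU_unit: "\<forall>i<n. cmod (u i) = 1" if "u \<in> UU" for u using that unfolding UU_def Uset_def by auto
  have UU_mult: "(\<lambda>i. a i * b i) \<in> UU" if hab: "a \<in> UU" "b \<in> UU" for a b
  proof -
    obtain j k where jk: "j < l" "k < l" "a \<in> Uset m n A (om l j)" "b \<in> Uset m n A (om l k)"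
      using hab unfolding UU_def by auto
    have "(\<lambda>i. a i * b i) \<in> Uset m n A (om l j * om l k)" using Uset_mult jk by blast
    also have "om l j * om l k = om l ((j + k) mod l)" using om_add om_mod[OF l1] by simp
    finally show ?thesis unfolding UU_def using l0 by auto
  qed
  have UU_cnj: "(\<lambda>i. cnj (a i)) \<in> UU" if ha: "a \<in> UU" for a
  proof -
    obtain j where j: "j < l" "a \<in> Uset m n A (om l j)" using ha unfolding UU_def by auto
    have "(\<lambda>i. cnj (a i)) \<in> Uset m n A (cnj (om l j))" using Uset_cnj j by blast
    also have "cnj (om l j) = om l ((l - j) mod l)" using om_cnj[OF j(1)] om_mod[OF l1] by simp
    finally show ?thesis unfolding UU_def using l0 by auto
  qed
  have UU_one: "(\<lambda>_. 1) \<in> UU" unfolding UU_def using Uset_one l0 by fastforce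
  have U1_UU: "Uset m n A 1 \<subseteq> UU" unfolding UU_def using l0 by fastforce
  have circE: "circ m n A l (emb n v a) (emb n v b) = emb n v (\<lambda>i. a i * b i)" if "a \<in> UU" "b \<in> UU" for a b
    using circ_emb' UU_unit that by blast
  have cnj_mult: "emb n v (\<lambda>i. cnj (a i) * a i) = emb n v (\<lambda>_. 1)" if "a \<in> UU" for a
    using UU_unit[OF that] unit_mult_cnj by (intro emb_cong) (auto simp: mult.commute)
  have carr: "carrier (PV_group m n A l) = emb n v ` UU" unfolding PV_group_def PV_eq by simp
  have mul: "x \<otimes>\<^bsub>PV_group m n A l\<^esub> y = circ m n A l x y" for x y unfolding PV_group_def by simp
  have one: "\<one>\<^bsub>PV_group m n A l\<^esub> = emb n v (\<lambda>_. 1)" unfolding PV_group_def vp_eq' by simp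
  have cg: "comm_group (PV_group m n A l)"
  proof (rule comm_groupI, unfold carr mul one)
    fix x y assume "x \<in> emb n v ` UU" "y \<in> emb n v ` UU"
    then obtain a b where "a \<in> UU" "b \<in> UU" "x = emb n v a" "y = emb n v b" by auto
    then show "circ m n A l x y \<in> emb n v ` UU" using circE UU_mult by auto
  next
    show "emb n v (\<lambda>_. 1) \<in> emb n v ` UU" using UU_one by auto
  next
    fix x y z assume "x \<in> emb n v ` UU" "y \<in> emb n v ` UU" "z \<in> emb n v ` UU"
    then obtain a b c where abc: "a \<in> UU" "b \<in> UU" "c \<in> UU" "x = emb n v a" "y = emb n v b" "z = emb n v c" by auto
    show "circ m n A l (circ m n A l x y) z = circ m n A l x (circ m n A l y z)"
      using abc circE UU_mult by (simp add: mult.assoc)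
  next
    fix x y assume "x \<in> emb n v ` UU" "y \<in> emb n v ` UU"
    then obtain a b where ab: "a \<in> UU" "b \<in> UU" "x = emb n v a" "y = emb n v b" by auto
    show "circ m n A l x y = circ m n A l y x" using ab circE by (simp add: mult.commute)
  next
    fix x assume "x \<in> emb n v ` UU"
    then obtain a where a: "a \<in> UU" "x = emb n v a" by auto
    show "circ m n A l (emb n v (\<lambda>_. 1)) x = x" using a circE UU_one by simp
  next
    fix x assume "x \<in> emb n v ` UU"
    then obtain a where a: "a \<in> UU" "x = emb n v a" by auto
    have "circ m n A l (emb n v (\<lambda>i. cnj (a i))) x = emb n v (\<lambda>_. 1)"
      using a circE UU_cnj cnj_mult by simp
    then show "\<exists>y\<in>emb n v ` UU. circ m n A l y x = emb n v (\<lambda>_. 1)" using UU_cnj a by blast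
  qed
  interpret G: comm_group "PV_group m n A l" by (rule cg)
  have PV0: "PVj m n A l 0 = emb n v ` Uset m n A 1" unfolding PVj_eq' by simp
  have inv_emb: "inv\<^bsub>PV_group m n A l\<^esub> (emb n v a) = emb n v (\<lambda>i. cnj (a i))" if "a \<in> UU" for a
  proof (rule G.inv_equality)
    show "emb n v (\<lambda>i. cnj (a i)) \<otimes>\<^bsub>PV_group m n A l\<^esub> emb n v a = \<one>\<^bsub>PV_group m n A l\<^esub>"
      unfolding mul one using that circE UU_cnj cnj_mult by simp
    show "emb n v a \<in> carrier (PV_group m n A l)" unfolding carr using that by auto
    show "emb n v (\<lambda>i. cnj (a i)) \<in> carrier (PV_group m n A l)" unfolding carr using that UU_cnj by auto
  qed
  have sg: "subgroup (PVj m n A l 0) (PV_group m n A l)"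
  proof (rule G.subgroupI)
    show "PVj m n A l 0 \<subseteq> carrier (PV_group m n A l)" unfolding PV0 carr using U1_UU by auto
    show "PVj m n A l 0 \<noteq> {}" unfolding PV0 using Uset_one by auto
    fix a assume "a \<in> PVj m n A l 0"
    then obtain u where u: "u \<in> Uset m n A 1" "a = emb n v u" unfolding PV0 by auto
    have "(\<lambda>i. cnj (u i)) \<in> Uset m n A 1" using Uset_cnj[OF u(1)] by simp
    then show "inv\<^bsub>PV_group m n A l\<^esub> a \<in> PVj m n A l 0" unfolding PV0 u(2) inv_emb[OF U1_UU[THEN subsetD, OF u(1)]] by auto
  next
    fix a b assume "a \<in> PVj m n A l 0" "b \<in> PVj m n A l 0"
    then obtain u u' where u: "u \<in> Uset m n A 1" "a = emb n v u" "u' \<in> Uset m n A 1" "b = emb n v u'" unfolding PV0 by auto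
    have "(\<lambda>i. u i * u' i) \<in> Uset m n A 1" using Uset_mult[OF u(1) u(3)] by simp
    then show "a \<otimes>\<^bsub>PV_group m n A l\<^esub> b \<in> PVj m n A l 0"
      unfolding mul PV0 u(2,4) using circE U1_UU u by (auto simp del: Uset_def)
  qed
  have cos: "PVj m n A l j \<in> rcosets\<^bsub>PV_group m n A l\<^esub> (PVj m n A l 0)" if j: "j \<in> {1..l - 1}" for j
  proof -
    have jl: "j < l" using j l1 by auto
    obtain a0 where a0: "a0 \<in> Uset m n A (om l j)" using U_nonempty'[OF jl] by auto
    have a0U: "a0 \<in> UU" unfolding UU_def using a0 jl by auto
    have "PVj m n A l j = PVj m n A l 0 #>\<^bsub>PV_group m n A l\<^esub> emb n v a0"
    proof
      show "PVj m n A l j \<subseteq> PVj m n A l 0 #>\<^bsub>PV_group m n A l\<^esub> emb n v a0"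
      proof
        fix y assume "y \<in> PVj m n A l j"
        then obtain b where b: "b \<in> Uset m n A (om l j)" "y = emb n v b" unfolding PVj_eq' by auto
        have bU: "b \<in> UU" unfolding UU_def using b jl by auto
        have "(\<lambda>i. b i * cnj (a0 i)) \<in> Uset m n A (om l j * cnj (om l j))"
          using Uset_mult[OF b(1) Uset_cnj[OF a0]] .
        moreover have "om l j * cnj (om l j) = 1" using unit_mult_cnj[of "om l j"] by simp
        ultimately have hU: "(\<lambda>i. b i * cnj (a0 i)) \<in> Uset m n A 1" by simp
        have "circ m n A l (emb n v (\<lambda>i. b i * cnj (a0 i))) (emb n v a0) = emb n v (\<lambda>i. b i * cnj (a0 i) * a0 i)"
          using circE U1_UU hU a0U by blast
        also have "\<dots> = y" unfolding b(2)
          using UU_unit[OF a0U] unit_mult_cnj by (intro emb_cong) (auto simp: mult.commute mult.left_commute)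
        finally show "y \<in> PVj m n A l 0 #>\<^bsub>PV_group m n A l\<^esub> emb n v a0"
          unfolding r_coset_def mul PV0 using hU by blast
      qed
      show "PVj m n A l 0 #>\<^bsub>PV_group m n A l\<^esub> emb n v a0 \<subseteq> PVj m n A l j"
      proof
        fix y assume "y \<in> PVj m n A l 0 #>\<^bsub>PV_group m n A l\<^esub> emb n v a0"
        then obtain c where c: "c \<in> Uset m n A 1" "y = circ m n A l (emb n v c) (emb n v a0)"
          unfolding r_coset_def mul PV0 by auto
        have "y = emb n v (\<lambda>i. c i * a0 i)" using c circE U1_UU a0U by blast
        moreover have "(\<lambda>i. c i * a0 i) \<in> Uset m n A (om l j)" using Uset_mult[OF c(1) a0] by simp
        ultimately show "y \<in> PVj m n A l j" unfolding PVj_eq' by blast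
      qed
    qed
    moreover have "emb n v a0 \<in> carrier (PV_group m n A l)" unfolding carr using a0U by auto
    ultimately show ?thesis unfolding RCOSETS_def by blast
  qed
  have DyE: "Dy n (emb n v a) = diagm n a" if "a \<in> UU" for a using Dy_emb[OF vpos UU_unit[OF that]] .
  have iso: "Dy n \<in> iso (PV_group m n A l) (D_group m n A l)"
    unfolding iso_def hom_def
  proof (intro CollectI conjI)
    have cD: "carrier (D_group m n A l) = diagm n ` UU" unfolding D_group_def Dall_eq by simp
    show "Dy n \<in> carrier (PV_group m n A l) \<rightarrow> carrier (D_group m n A l)"
      unfolding carr cD using DyE by auto
    show "\<forall>x\<in>carrier (PV_group m n A l). \<forall>y\<in>carrier (PV_group m n A l).
        Dy n (x \<otimes>\<^bsub>PV_group m n A l\<^esub> y) = Dy n x \<otimes>\<^bsub>D_group m n A l\<^esub> Dy n y"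
    proof (intro ballI)
      fix x y assume "x \<in> carrier (PV_group m n A l)" "y \<in> carrier (PV_group m n A l)"
      then obtain a b where ab: "a \<in> UU" "b \<in> UU" "x = emb n v a" "y = emb n v b" unfolding carr by auto
      show "Dy n (x \<otimes>\<^bsub>PV_group m n A l\<^esub> y) = Dy n x \<otimes>\<^bsub>D_group m n A l\<^esub> Dy n y"
        unfolding mul using ab circE DyE UU_mult by (simp add: D_group_def diag_mult)
    qed
    show "bij_betw (Dy n) (carrier (PV_group m n A l)) (carrier (D_group m n A l))"
      unfolding bij_betw_def carr cD
    proof
      show "inj_on (Dy n) (emb n v ` UU)"
      proof (rule inj_onI)
        fix x y assume "x \<in> emb n v ` UU" "y \<in> emb n v ` UU" "Dy n x = Dy n y"
        then obtain a b where ab: "a \<in> UU" "b \<in> UU" "x = emb n v a" "y = emb n v b" "diagm n a = diagm n b"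
          using DyE by auto
        have "a i = b i" if "i < n" for i
          using arg_cong[OF ab(5), of "\<lambda>M. M $$ (i,i)"] that by (simp add: diagm_def)
        then show "x = y" using ab emb_cong by auto
      qed
      show "Dy n ` emb n v ` UU = diagm n ` UU" unfolding image_image using DyE by (intro image_cong) auto
    qed
  qed
  have img: "Dy n ` PVj m n A l j = Dset m n A l j" if "j < l" for j
  proof -
    have "Uset m n A (om l j) \<subseteq> UU" unfolding UU_def using that by auto
    then have "(\<lambda>a. Dy n (emb n v a)) ` Uset m n A (om l j) = diagm n ` Uset m n A (om l j)"
      using DyE by (intro image_cong) auto
    then show ?thesis unfolding PVj_eq' Dset_eq' image_image .
  qed
  show ?thesis using cg sg cos iso img by blast
qed

end

theorem lemma3p1:
  fixes m n l :: nat and A :: "nat list \<Rightarrow> real"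
  assumes "m \<ge> 2" and "n \<ge> 1" and "l \<ge> 1"
    and "tensor_nonneg m n A"
    and "weakly_irreducible m n A"
    and "spectral_sym m n A l"
  shows "comm_group (PV_group m n A l)
    \<and> subgroup (PVj m n A l 0) (PV_group m n A l)
    \<and> (\<forall>j \<in> {1..l - 1}. PVj m n A l j \<in> rcosets\<^bsub>PV_group m n A l\<^esub> (PVj m n A l 0))
    \<and> Dy n \<in> iso (PV_group m n A l) (D_group m n A l)
    \<and> (\<forall>j < l. Dy n ` PVj m n A l j = Dset m n A l j)"
proof -
  obtain x r where x: "\<forall>i<n. 0 < x i" "0 \<le> r" "\<forall>i<n. Ar m n A x i = r * x i ^ (m-1)"
    using exists_pos_eig[OF assms(1,4,5,2)] by blast
  define v where "v k = (1 / x 0) * x k" for k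
  have x0: "0 < x 0" using x(1) assms(2) by auto
  have vpos: "\<forall>i<n. 0 < v i" unfolding v_def using x(1) x0 by auto
  have v0: "v 0 = 1" unfolding v_def using x0 by simp
  have ev: "\<forall>i<n. Ar m n A v i = r * v i ^ (m-1)"
  proof (intro allI impI)
    fix i assume i: "i < n"
    have "Ar m n A v i = (1 / x 0) ^ (m-1) * Ar m n A x i"
      unfolding v_def by (rule Ar_scale[OF assms(1,4)])
    then show "Ar m n A v i = r * v i ^ (m-1)" using x(3) i unfolding v_def by (simp add: power_mult_distrib power_divide)
  qed
  show ?thesis using main_ctx[OF assms vpos v0 x(2) ev] .
qed


end
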